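(* Let $A=KQ/I$ be a gentle tree algebra over an algebraically closed field $K$ whose quiver $Q$ has underlying graph $\mathbb{A}_n$ (with arbitrary orientation). If $\mathrm{rad}^2 A=0$, then the trivial extension $T(A)=A\ltimes DA$ is a Brauer line algebra.
   Context: $D=\mathrm{Hom}_K(-,K)$; $T(A)$ has underlying space $A\oplus DA$ with multiplication $(a,f)(b,g)=(ab,ag+fb)$. Gentle: every vertex of $Q$ has at most two incoming and at most two outgoing arrows; for each arrow $\alpha$ there is at most one arrow $\beta$ with $\alpha\beta\in I$, at most one $\gamma$ with $\gamma\alpha\in I$, at most one $\beta'$ with $\alpha\beta'\notin I$ and at most one $\gamma'$ with $\gamma'\alpha\notin I$ (composable arrows); $I$ is admissible and generated by paths of length 2; gentle tree means $Q$ is a tree. $\mathbb{A}_n$ is the path graph with $n$ vertices. A Brauer line algebra with $n$ edges is the Brauer graph algebra (all multiplicities $1$) of the path graph with $n$ edges; concretely it is $KQ'/I'$ with $Q'$: vertices $1,\dots,n$, arrows $\alpha_i:i\to i+1$ and $\beta_i:i+1\to i$ for $1\le i\le n-1$, and $I'=\langle \alpha_i\alpha_{i+1},\ \beta_{i+1}\beta_i,\ \beta_i\alpha_i-\alpha_{i+1}\beta_{i+1}\mid 1\le i\le n-2\rangle$. *)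

theory Defs
  imports "HOL-Computational_Algebra.Polynomial"
begin

definition alg_closed :: "'k::field itself \<Rightarrow> bool" where
  "alg_closed _ = (\<forall>p::'k poly. degree p > 0 \<longrightarrow> (\<exists>x. poly p x = 0))"

record ('k, 'a) kalg =
  acarr :: "'a set"
  aadd  :: "'a \<Rightarrow> 'a \<Rightarrow> 'a"
  azero :: "'a"
  asmul :: "'k \<Rightarrow> 'a \<Rightarrow> 'a"
  amul  :: "'a \<Rightarrow> 'a \<Rightarrow> 'a"
  aone  :: "'a"

definition asub :: "('k::field, 'a) kalg \<Rightarrow> 'a \<Rightarrow> 'a \<Rightarrow> 'a" where
  "asub A x y = aadd A x (asmul A (-1) y)"

definition alg_iso :: "('k, 'a) kalg \<Rightarrow> ('k, 'b) kalg \<Rightarrow> ('a \<Rightarrow> 'b) \<Rightarrow> bool" where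
  "alg_iso A B f \<longleftrightarrow> bij_betw f (acarr A) (acarr B)
     \<and> (\<forall>x\<in>acarr A. \<forall>y\<in>acarr A. f (aadd A x y) = aadd B (f x) (f y))
     \<and> (\<forall>c. \<forall>x\<in>acarr A. f (asmul A c x) = asmul B c (f x))
     \<and> (\<forall>x\<in>acarr A. \<forall>y\<in>acarr A. f (amul A x y) = amul B (f x) (f y))
     \<and> f (aone A) = aone B"

definition alg_isomorphic :: "('k, 'a) kalg \<Rightarrow> ('k, 'b) kalg \<Rightarrow> bool" where
  "alg_isomorphic A B \<longleftrightarrow> (\<exists>f. alg_iso A B f)"

definition is_ideal :: "('k::field, 'a) kalg \<Rightarrow> 'a set \<Rightarrow> bool" where
  "is_ideal A J \<longleftrightarrow> J \<subseteq> acarr A \<and> azero A \<in> J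
     \<and> (\<forall>x\<in>J. \<forall>y\<in>J. aadd A x y \<in> J)
     \<and> (\<forall>c. \<forall>x\<in>J. asmul A c x \<in> J)
     \<and> (\<forall>a\<in>acarr A. \<forall>x\<in>J. amul A a x \<in> J \<and> amul A x a \<in> J)"

definition gen_ideal :: "('k::field, 'a) kalg \<Rightarrow> 'a set \<Rightarrow> 'a set" where
  "gen_ideal A S = \<Inter>{J. is_ideal A J \<and> S \<subseteq> J}"

definition qcoset :: "('k::field, 'a) kalg \<Rightarrow> 'a set \<Rightarrow> 'a \<Rightarrow> 'a set" where
  "qcoset A J x = {y \<in> acarr A. asub A y x \<in> J}"

definition qrep :: "'a set \<Rightarrow> 'a" where
  "qrep X = (SOME x. x \<in> X)"

definition quot_alg :: "('k::field, 'a) kalg \<Rightarrow> 'a set \<Rightarrow> ('k, 'a set) kalg" where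
  "quot_alg A J = \<lparr> acarr = qcoset A J ` acarr A,
      aadd = (\<lambda>X Y. qcoset A J (aadd A (qrep X) (qrep Y))),
      azero = qcoset A J (azero A),
      asmul = (\<lambda>c X. qcoset A J (asmul A c (qrep X))),
      amul = (\<lambda>X Y. qcoset A J (amul A (qrep X) (qrep Y))),
      aone = qcoset A J (aone A) \<rparr>"

definition jrad :: "('k::field, 'a) kalg \<Rightarrow> 'a set" where
  "jrad A = {x \<in> acarr A. \<forall>y\<in>acarr A. \<exists>z\<in>acarr A.
       amul A z (asub A (aone A) (amul A y x)) = aone A
     \<and> amul A (asub A (aone A) (amul A y x)) z = aone A}"

text \<open>rad^2 A = 0 (rad^2 A is spanned by the products of two radical elements).\<close>
definition rad_sq_zero :: "('k::field, 'a) kalg \<Rightarrow> bool" where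
  "rad_sq_zero A \<longleftrightarrow> (\<forall>x\<in>jrad A. \<forall>y\<in>jrad A. amul A x y = azero A)"

definition kdual :: "('k::field, 'a) kalg \<Rightarrow> ('a \<Rightarrow> 'k) set" where
  "kdual A = {f. (\<forall>x. x \<notin> acarr A \<longrightarrow> f x = 0)
     \<and> (\<forall>x\<in>acarr A. \<forall>y\<in>acarr A. f (aadd A x y) = f x + f y)
     \<and> (\<forall>c. \<forall>x\<in>acarr A. f (asmul A c x) = c * f x)}"

text \<open>(a,f)(b,g) = (ab, ag + fb) where (a g)(x) = g(x a) and (f b)(x) = f(b x).\<close>
definition triv_ext :: "('k::field, 'a) kalg \<Rightarrow> ('k, 'a \<times> ('a \<Rightarrow> 'k)) kalg" where
  "triv_ext A = \<lparr> acarr = acarr A \<times> kdual A,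
      aadd = (\<lambda>(a, f) (b, g). (aadd A a b, \<lambda>x. f x + g x)),
      azero = (azero A, \<lambda>x. 0),
      asmul = (\<lambda>c (a, f). (asmul A c a, \<lambda>x. c * f x)),
      amul = (\<lambda>(a, f) (b, g). (amul A a b,
                 \<lambda>x. if x \<in> acarr A then g (amul A x a) + f (amul A b x) else 0)),
      aone = (aone A, \<lambda>x. 0) \<rparr>"

record ('v, 'e) quiver =
  verts :: "'v set"
  arrs  :: "'e set"
  src   :: "'e \<Rightarrow> 'v"
  tgt   :: "'e \<Rightarrow> 'v"

text \<open>A path is a start vertex together with a list of arrows, composed left to right
  (so the path \<alpha>\<beta> first traverses \<alpha>, then \<beta>). Trivial paths e_v are (v, []).\<close>
definition is_path :: "('v, 'e) quiver \<Rightarrow> 'v \<times> 'e list \<Rightarrow> bool" where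
  "is_path Q p \<longleftrightarrow> fst p \<in> verts Q \<and> set (snd p) \<subseteq> arrs Q
     \<and> (snd p \<noteq> [] \<longrightarrow> src Q (hd (snd p)) = fst p)
     \<and> (\<forall>i. Suc i < length (snd p) \<longrightarrow> tgt Q (snd p ! i) = src Q (snd p ! Suc i))"

definition pend :: "('v, 'e) quiver \<Rightarrow> 'v \<times> 'e list \<Rightarrow> 'v" where
  "pend Q p = (if snd p = [] then fst p else tgt Q (last (snd p)))"

definition path_alg :: "('v, 'e) quiver \<Rightarrow> ('k::field, 'v \<times> 'e list \<Rightarrow> 'k) kalg" where
  "path_alg Q = \<lparr> acarr = {f. (\<forall>p. \<not> is_path Q p \<longrightarrow> f p = 0) \<and> finite {p. f p \<noteq> 0}},
      aadd = (\<lambda>f g p. f p + g p),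
      azero = (\<lambda>p. 0),
      asmul = (\<lambda>c f p. c * f p),
      amul = (\<lambda>f g p. if is_path Q p then
                 (\<Sum>k\<in>{0..length (snd p)}.
                    f (fst p, take k (snd p)) * g (pend Q (fst p, take k (snd p)), drop k (snd p)))
               else 0),
      aone = (\<lambda>p. if is_path Q p \<and> snd p = [] then 1 else 0) \<rparr>"

definition pth :: "'v \<times> 'e list \<Rightarrow> ('v \<times> 'e list \<Rightarrow> 'k::field)" where
  "pth p = (\<lambda>q. if q = p then 1 else 0)"

definition at_most_one :: "'a set \<Rightarrow> bool" where
  "at_most_one S \<longleftrightarrow> (\<forall>x\<in>S. \<forall>y\<in>S. x = y)"

definition gentle :: "('v, 'e) quiver \<Rightarrow> ('v \<times> 'e list \<Rightarrow> 'k::field) set \<Rightarrow> bool" where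
  "gentle Q I \<longleftrightarrow> finite (verts Q) \<and> finite (arrs Q)
   \<and> (\<forall>a\<in>arrs Q. src Q a \<in> verts Q \<and> tgt Q a \<in> verts Q)
   \<and> (\<forall>v\<in>verts Q. card {a\<in>arrs Q. tgt Q a = v} \<le> 2 \<and> card {a\<in>arrs Q. src Q a = v} \<le> 2)
   \<and> (\<forall>a\<in>arrs Q.
        at_most_one {b\<in>arrs Q. tgt Q a = src Q b \<and> pth (src Q a, [a, b]) \<in> I}
      \<and> at_most_one {c\<in>arrs Q. tgt Q c = src Q a \<and> pth (src Q c, [c, a]) \<in> I}
      \<and> at_most_one {b\<in>arrs Q. tgt Q a = src Q b \<and> pth (src Q a, [a, b]) \<notin> I}
      \<and> at_most_one {c\<in>arrs Q. tgt Q c = src Q a \<and> pth (src Q c, [c, a]) \<notin> I})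
   \<and> (\<exists>R. R \<subseteq> {p. is_path Q p \<and> length (snd p) = 2}
        \<and> I = gen_ideal (path_alg Q) (pth ` R))
   \<and> (\<exists>m. \<forall>p. is_path Q p \<and> length (snd p) \<ge> m \<longrightarrow> pth p \<in> I)
   \<and> (\<forall>f\<in>I. \<forall>p. length (snd p) < 2 \<longrightarrow> f p = 0)"

text \<open>A quiver with underlying graph A_n (vertices 1..n), arbitrary orientation:
  arrow i (1 \<le> i < n) joins i and i+1, pointing i \<rightarrow> i+1 iff orient i.\<close>
definition lineQ :: "nat \<Rightarrow> (nat \<Rightarrow> bool) \<Rightarrow> (nat, nat) quiver" where
  "lineQ n orient = \<lparr> verts = {1..n}, arrs = {1..<n},
      src = (\<lambda>i. if orient i then i else Suc i),
      tgt = (\<lambda>i. if orient i then Suc i else i) \<rparr>"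

datatype barr = BA nat | BB nat | BL

text \<open>For n \<ge> 2: arrows \<alpha>_i = BA i : i \<rightarrow> i+1 and \<beta>_i = BB i : i+1 \<rightarrow> i.
  For n = 1 (a single edge, both ends truncated) a loop BL at vertex 1.\<close>
definition brauerQ :: "nat \<Rightarrow> (nat, barr) quiver" where
  "brauerQ n = \<lparr> verts = {1..n},
      arrs = (if n = 1 then {BL} else BA ` {1..<n} \<union> BB ` {1..<n}),
      src = (\<lambda>a. case a of BA i \<Rightarrow> i | BB i \<Rightarrow> Suc i | BL \<Rightarrow> 1),
      tgt = (\<lambda>a. case a of BA i \<Rightarrow> Suc i | BB i \<Rightarrow> i | BL \<Rightarrow> 1) \<rparr>"

definition brauer_rels :: "nat \<Rightarrow> (nat \<times> barr list \<Rightarrow> 'k::field) set" where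
  "brauer_rels n = (if n = 1 then {pth (1, [BL, BL])} else
      (\<Union>i\<in>{1..n-2}. {pth (i, [BA i, BA (Suc i)]),
                      pth (i + 2, [BB (Suc i), BB i]),
                      (\<lambda>p. pth (Suc i, [BB i, BA i]) p - pth (Suc i, [BA (Suc i), BB (Suc i)]) p)})
      \<union> {pth (1, [BA 1, BB 1, BA 1]), pth (n, [BB (n - 1), BA (n - 1), BB (n - 1)])})"

definition brauer_line :: "nat \<Rightarrow> ('k::field, (nat \<times> barr list \<Rightarrow> 'k) set) kalg" where
  "brauer_line n = quot_alg (path_alg (brauerQ n)) (gen_ideal (path_alg (brauerQ n)) (brauer_rels n))"

end

theory Submission
  imports Defs
begin

lemma pa_simps[simp]:
  "acarr (path_alg Q) = {f. (\<forall>p. \<not> is_path Q p \<longrightarrow> f p = 0) \<and> finite {p. f p \<noteq> 0}}"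
  "aadd (path_alg Q) = (\<lambda>f g p. f p + g p)"
  "azero (path_alg Q) = (\<lambda>p. 0)"
  "asmul (path_alg Q) = (\<lambda>c f p. c * f p)"
  "aone (path_alg Q) = (\<lambda>p. if is_path Q p \<and> snd p = [] then 1 else 0)"
  by (simp_all add: path_alg_def)

lemma pa_mul:
  "amul (path_alg Q) f g p = (if is_path Q p then
                 (\<Sum>k\<in>{0..length (snd p)}.
                    f (fst p, take k (snd p)) * g (pend Q (fst p, take k (snd p)), drop k (snd p)))
               else 0)"
  by (simp add: path_alg_def)

lemma is_path_Nil[simp]: "is_path Q (v, []) \<longleftrightarrow> v \<in> verts Q"
  by (simp add: is_path_def)

lemma is_path_Cons:
  assumes "\<forall>a\<in>arrs Q. tgt Q a \<in> verts Q"
  shows "is_path Q (v, a # as) \<longleftrightarrow> v \<in> verts Q \<and> a \<in> arrs Q \<and> src Q a = v \<and> is_path Q (tgt Q a, as)"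
proof
  assume h: "is_path Q (v, a # as)"
  then have 1: "v \<in> verts Q" "a \<in> arrs Q" "src Q a = v" "set as \<subseteq> arrs Q" by (auto simp: is_path_def)
  have 2: "\<forall>i. Suc i < length as \<longrightarrow> tgt Q (as ! i) = src Q (as ! Suc i)"
  proof (intro allI impI)
    fix i assume "Suc i < length as"
    then show "tgt Q (as ! i) = src Q (as ! Suc i)" using h unfolding is_path_def
      by (metis Suc_less_eq length_Cons nth_Cons_Suc snd_conv)
  qed
  have 3: "as \<noteq> [] \<longrightarrow> src Q (hd as) = tgt Q a"
  proof
    assume "as \<noteq> []"
    then have "Suc 0 < length (a # as)" by simp
    then show "src Q (hd as) = tgt Q a" using h unfolding is_path_def
      by (metis \<open>as \<noteq> []\<close> hd_conv_nth nth_Cons_0 nth_Cons_Suc snd_conv)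
  qed
  show "v \<in> verts Q \<and> a \<in> arrs Q \<and> src Q a = v \<and> is_path Q (tgt Q a, as)"
    using 1 2 3 assms by (auto simp: is_path_def)
next
  assume h: "v \<in> verts Q \<and> a \<in> arrs Q \<and> src Q a = v \<and> is_path Q (tgt Q a, as)"
  have "\<forall>i. Suc i < length (a # as) \<longrightarrow> tgt Q ((a # as) ! i) = src Q ((a # as) ! Suc i)"
  proof (intro allI impI)
    fix i assume i: "Suc i < length (a # as)"
    show "tgt Q ((a # as) ! i) = src Q ((a # as) ! Suc i)"
    proof (cases i)
      case 0
      then show ?thesis using h i unfolding is_path_def by (auto simp: hd_conv_nth)
    next
      case (Suc j)
      then show ?thesis using h i unfolding is_path_def by auto
    qed
  qed
  then show "is_path Q (v, a # as)" using h unfolding is_path_def by auto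
qed

lemma pend_Nil[simp]: "pend Q (v, []) = v" by (simp add: pend_def)
lemma pend_Cons[simp]: "pend Q (v, a # as) = pend Q (tgt Q a, as)"
  by (simp add: pend_def)

lemma is_path_append:
  assumes "\<forall>a\<in>arrs Q. tgt Q a \<in> verts Q"
  shows "is_path Q (v, xs) \<Longrightarrow> is_path Q (pend Q (v, xs), ys) \<Longrightarrow> is_path Q (v, xs @ ys)"
proof (induction xs arbitrary: v)
  case Nil then show ?case by simp
next
  case (Cons a xs)
  then show ?case by (simp add: is_path_Cons[OF assms])
qed

lemma pend_append: "pend Q (v, xs @ ys) = pend Q (pend Q (v, xs), ys)"
  by (induction xs arbitrary: v) auto

lemma is_path_take:
  assumes "\<forall>a\<in>arrs Q. tgt Q a \<in> verts Q"
  shows "is_path Q (v, xs) \<Longrightarrow> is_path Q (v, take k xs)"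
proof (induction xs arbitrary: v k)
  case Nil then show ?case by simp
next
  case (Cons a xs)
  then show ?case by (cases k) (auto simp: is_path_Cons[OF assms])
qed

lemma is_path_drop:
  assumes "\<forall>a\<in>arrs Q. tgt Q a \<in> verts Q"
  shows "is_path Q (v, xs) \<Longrightarrow> is_path Q (pend Q (v, take k xs), drop k xs)"
proof (induction xs arbitrary: v k)
  case Nil then show ?case by simp
next
  case (Cons a xs)
  then show ?case by (cases k) (auto simp: is_path_Cons[OF assms])
qed


definition tgt_ok :: "('v,'e) quiver \<Rightarrow> bool" where
  "tgt_ok Q \<longleftrightarrow> (\<forall>a\<in>arrs Q. tgt Q a \<in> verts Q)"

lemma sum_single_nz:
  assumes "finite A" "a \<in> A" "\<forall>k\<in>A. k \<noteq> a \<longrightarrow> f k = 0"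
  shows "sum f A = f a"
proof -
  have "sum f A = f a + sum f (A - {a})" using assms by (simp add: sum.remove)
  also have "sum f (A - {a}) = 0" using assms by (intro sum.neutral) auto
  finally show ?thesis by simp
qed

lemma pa_mul_closed:
  assumes "f \<in> acarr (path_alg Q)" "g \<in> acarr (path_alg Q)"
  shows "amul (path_alg Q) f g \<in> acarr (path_alg Q)"
proof -
  let ?h = "amul (path_alg Q) f g"
  have "{p. ?h p \<noteq> 0} \<subseteq> (\<lambda>(q, r). (fst q, snd q @ snd r)) ` ({q. f q \<noteq> 0} \<times> {r. g r \<noteq> 0})"
  proof
    fix p assume "p \<in> {p. ?h p \<noteq> 0}"
    then have "is_path Q p" and s: "(\<Sum>k\<in>{0..length (snd p)}.
                    f (fst p, take k (snd p)) * g (pend Q (fst p, take k (snd p)), drop k (snd p))) \<noteq> 0"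
      by (auto simp: pa_mul split: if_splits)
    then obtain k where "f (fst p, take k (snd p)) * g (pend Q (fst p, take k (snd p)), drop k (snd p)) \<noteq> 0"
      by (meson sum.neutral)
    then show "p \<in> (\<lambda>(q, r). (fst q, snd q @ snd r)) ` ({q. f q \<noteq> 0} \<times> {r. g r \<noteq> 0})"
      by (intro image_eqI[where x = "((fst p, take k (snd p)), (pend Q (fst p, take k (snd p)), drop k (snd p)))"]) auto
  qed
  moreover have "finite ((\<lambda>(q, r). (fst q, snd q @ snd r)) ` ({q. f q \<noteq> 0} \<times> {r. g r \<noteq> 0}))"
    using assms by auto
  ultimately have fin: "finite {p. ?h p \<noteq> 0}" by (rule finite_subset)
  have "\<forall>p. \<not> is_path Q p \<longrightarrow> ?h p = 0" by (simp add: pa_mul)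
  with fin show ?thesis by simp
qed

lemma pa_add_closed:
  "f \<in> acarr (path_alg Q) \<Longrightarrow> g \<in> acarr (path_alg Q) \<Longrightarrow> (\<lambda>p. f p + g p) \<in> acarr (path_alg Q)"
proof -
  assume a: "f \<in> acarr (path_alg Q)" "g \<in> acarr (path_alg Q)"
  have "{p. f p + g p \<noteq> 0} \<subseteq> {p. f p \<noteq> 0} \<union> {p. g p \<noteq> 0}" by auto
  then show ?thesis using a by (auto intro: finite_subset)
qed

lemma pa_smul_closed:
  "f \<in> acarr (path_alg Q) \<Longrightarrow> (\<lambda>p. c * f p) \<in> acarr (path_alg Q)"
proof -
  assume a: "f \<in> acarr (path_alg Q)"
  have "{p. c * f p \<noteq> 0} \<subseteq> {p. f p \<noteq> 0}" by auto
  then show ?thesis using a by (auto intro: finite_subset)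
qed

lemma pa_zero_closed: "(\<lambda>p. 0) \<in> acarr (path_alg Q)" by simp

lemma pa_one_closed:
  assumes "finite (verts Q)"
  shows "(\<lambda>p. if is_path Q p \<and> snd p = [] then (1::'a::field) else 0) \<in> acarr (path_alg Q)"
proof -
  have "{p. (if is_path Q p \<and> snd p = [] then 1 else 0) \<noteq> (0::'a::field)} \<subseteq> (\<lambda>v. (v, [])) ` verts Q"
  proof
    fix p :: "'b \<times> 'c list" assume "p \<in> {p. (if is_path Q p \<and> snd p = [] then 1 else 0) \<noteq> (0::'a)}"
    then have "is_path Q p" "snd p = []" by (auto split: if_splits)
    then show "p \<in> (\<lambda>v. (v, [])) ` verts Q" by (cases p) auto
  qed
  then have "finite {p. (if is_path Q p \<and> snd p = [] then 1 else 0) \<noteq> (0::'a)}"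
    using assms by (rule finite_subset[OF _ finite_imageI])
  then show ?thesis by simp
qed

lemma pth_closed: "is_path Q p \<Longrightarrow> (pth p :: _ \<Rightarrow> 'k::field) \<in> acarr (path_alg Q)"
proof -
  assume "is_path Q p"
  moreover have "{q. (pth p q :: 'k) \<noteq> 0} \<subseteq> {p}" by (auto simp: pth_def)
  ultimately show ?thesis by (auto simp: pth_def intro: finite_subset)
qed

lemma pth_mult:
  fixes p q :: "'v \<times> 'e list"
  assumes Q: "tgt_ok Q" and p: "is_path Q p" and q: "is_path Q q" and e: "pend Q p = fst q"
  shows "amul (path_alg Q) (pth p) (pth q) = (pth (fst p, snd p @ snd q) :: 'v \<times> 'e list \<Rightarrow> 'k::field)"
proof
  fix r
  obtain v xs where pv: "p = (v, xs)" by (cases p)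
  obtain w ys where qv: "q = (w, ys)" by (cases q)
  have Q': "\<forall>a\<in>arrs Q. tgt Q a \<in> verts Q" using Q by (simp add: tgt_ok_def)
  show "amul (path_alg Q) (pth p) (pth q) r = (pth (fst p, snd p @ snd q) r :: 'k)"
  proof (cases "r = (v, xs @ ys)")
    case True
    have rp: "is_path Q r" using True is_path_append[OF Q'] p q e pv qv by auto
    have "amul (path_alg Q) (pth p) (pth q) r =
        (\<Sum>k\<in>{0..length (snd r)}. (pth p (fst r, take k (snd r)) :: 'k) * pth q (pend Q (fst r, take k (snd r)), drop k (snd r)))"
      using rp by (simp add: pa_mul)
    also have "\<dots> = (pth p (fst r, take (length xs) (snd r)) :: 'k) * pth q (pend Q (fst r, take (length xs) (snd r)), drop (length xs) (snd r))"
    proof (rule sum_single_nz)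
      show "\<forall>k\<in>{0..length (snd r)}. k \<noteq> length xs \<longrightarrow>
         (pth p (fst r, take k (snd r)) :: 'k) * pth q (pend Q (fst r, take k (snd r)), drop k (snd r)) = 0"
      proof (intro ballI impI)
        fix k assume k: "k \<in> {0..length (snd r)}" "k \<noteq> length xs"
        have "take k (xs @ ys) \<noteq> xs"
        proof
          assume "take k (xs @ ys) = xs"
          then have "length (take k (xs @ ys)) = length xs" by simp
          then show False using k True by auto
        qed
        then show "(pth p (fst r, take k (snd r)) :: 'k) * pth q (pend Q (fst r, take k (snd r)), drop k (snd r)) = 0"
          using True pv by (simp add: pth_def)
      qed
    qed (use True in auto)
    also have "\<dots> = 1" using True pv qv e by (simp add: pth_def)
    finally show ?thesis using True pv qv by (simp add: pth_def)
  next
    case False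
    have z: "(pth p (fst r, take k (snd r)) :: 'k) * pth q (pend Q (fst r, take k (snd r)), drop k (snd r)) = 0" for k
    proof (rule ccontr)
      assume "\<not> ?thesis"
      then have "(fst r, take k (snd r)) = p" "(pend Q (fst r, take k (snd r)), drop k (snd r)) = q"
        by (auto simp: pth_def split: if_splits)
      then have "r = (v, xs @ ys)" using pv qv
        by (metis append_take_drop_id fst_conv prod.collapse prod.inject)
      then show False using False by simp
    qed
    have "amul (path_alg Q) (pth p) (pth q) r = (0::'k)" unfolding pa_mul by (simp only: z sum.neutral_const if_cancel)
    moreover have "(pth (fst p, snd p @ snd q) r :: 'k) = 0" using False pv qv by (simp add: pth_def)
    ultimately show ?thesis by simp
  qed
qed

lemma pa_mul_add_left:
  "amul (path_alg Q) (\<lambda>p. f p + g p) h = (\<lambda>p. amul (path_alg Q) f h p + amul (path_alg Q) g h p)"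
  by (auto simp: pa_mul sum.distrib[symmetric] algebra_simps)

lemma pa_mul_add_right:
  "amul (path_alg Q) h (\<lambda>p. f p + g p) = (\<lambda>p. amul (path_alg Q) h f p + amul (path_alg Q) h g p)"
  by (auto simp: pa_mul sum.distrib[symmetric] algebra_simps)

lemma pa_mul_smul_left:
  "amul (path_alg Q) (\<lambda>p. c * f p) h = (\<lambda>p. c * amul (path_alg Q) f h p)"
  by (auto simp: pa_mul sum_distrib_left algebra_simps)

lemma pa_mul_smul_right:
  "amul (path_alg Q) h (\<lambda>p. c * f p) = (\<lambda>p. c * amul (path_alg Q) h f p)"
  by (auto simp: pa_mul sum_distrib_left algebra_simps)

lemma pa_one_left:
  assumes "\<forall>p. \<not> is_path Q p \<longrightarrow> x p = 0" "tgt_ok Q"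
  shows "amul (path_alg Q) (aone (path_alg Q)) x = x"
proof
  fix p
  show "amul (path_alg Q) (aone (path_alg Q)) x p = x p"
  proof (cases "is_path Q p")
    case True
    obtain v xs where pv: "p = (v, xs)" by (cases p)
    have vv: "v \<in> verts Q" using True pv by (simp add: is_path_def)
    have "amul (path_alg Q) (aone (path_alg Q)) x p =
      (\<Sum>k\<in>{0..length xs}. (if is_path Q (v, take k xs) \<and> take k xs = [] then 1 else 0) * x (pend Q (v, take k xs), drop k xs))"
      using True pv by (simp add: pa_mul)
    also have "\<dots> = (if is_path Q (v, take 0 xs) \<and> take 0 xs = [] then 1 else 0) * x (pend Q (v, take 0 xs), drop 0 xs)"
      by (rule sum_single_nz) auto
    also have "\<dots> = x p" using vv pv by simp
    finally show ?thesis .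
  next
    case False
    have "x p = 0" using assms(1) False by blast
    then show ?thesis using False by (simp add: pa_mul)
  qed
qed

lemma pa_one_right:
  assumes "\<forall>p. \<not> is_path Q p \<longrightarrow> x p = 0" "tgt_ok Q"
  shows "amul (path_alg Q) x (aone (path_alg Q)) = x"
proof
  fix p
  show "amul (path_alg Q) x (aone (path_alg Q)) p = x p"
  proof (cases "is_path Q p")
    case True
    obtain v xs where pv: "p = (v, xs)" by (cases p)
    have Q': "\<forall>a\<in>arrs Q. tgt Q a \<in> verts Q" using assms by (simp add: tgt_ok_def)
    have pe: "is_path Q (pend Q (v, xs), [])" using is_path_drop[OF Q', of v xs "length xs"] True pv by simp
    have "amul (path_alg Q) x (aone (path_alg Q)) p =
      (\<Sum>k\<in>{0..length xs}. x (v, take k xs) * (if is_path Q (pend Q (v, take k xs), drop k xs) \<and> drop k xs = [] then 1 else 0))"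
      using True pv by (simp add: pa_mul)
    also have "\<dots> = x (v, take (length xs) xs) * (if is_path Q (pend Q (v, take (length xs) xs), drop (length xs) xs) \<and> drop (length xs) xs = [] then 1 else 0)"
      by (rule sum_single_nz) auto
    also have "\<dots> = x p" using pe pv by simp
    finally show ?thesis .
  next
    case False
    have "x p = 0" using assms(1) False by blast
    then show ?thesis using False by (simp add: pa_mul)
  qed
qed


definition ops_closed :: "('k, 'a) kalg \<Rightarrow> bool" where
  "ops_closed A \<longleftrightarrow> (\<forall>x\<in>acarr A. \<forall>y\<in>acarr A. aadd A x y \<in> acarr A)
     \<and> (\<forall>c. \<forall>x\<in>acarr A. asmul A c x \<in> acarr A)
     \<and> (\<forall>x\<in>acarr A. \<forall>y\<in>acarr A. amul A x y \<in> acarr A)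
     \<and> aone A \<in> acarr A"

lemma alg_iso_comp:
  assumes "alg_iso A B f" "alg_iso B C g"
  shows "alg_iso A C (g \<circ> f)"
proof -
  have fb: "\<forall>x\<in>acarr A. f x \<in> acarr B" using assms(1) unfolding alg_iso_def bij_betw_def by auto
  show ?thesis using assms fb unfolding alg_iso_def
    by (auto intro: bij_betw_trans)
qed

lemma alg_iso_inv:
  assumes iso: "alg_iso A B f" and cl: "ops_closed A"
  shows "alg_iso B A (inv_into (acarr A) f)"
proof -
  let ?g = "inv_into (acarr A) f"
  have bij: "bij_betw f (acarr A) (acarr B)" using iso by (simp add: alg_iso_def)
  then have inj: "inj_on f (acarr A)" and im: "f ` acarr A = acarr B" by (auto simp: bij_betw_def)
  have gA: "x' \<in> acarr B \<Longrightarrow> ?g x' \<in> acarr A" for x' using im by (metis inv_into_into)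
  have fg: "x' \<in> acarr B \<Longrightarrow> f (?g x') = x'" for x' using im by (simp add: f_inv_into_f)
  have gf: "x \<in> acarr A \<Longrightarrow> ?g (f x) = x" for x using inj by simp
  have h: "\<forall>x\<in>acarr A. \<forall>y\<in>acarr A. f (aadd A x y) = aadd B (f x) (f y)"
     "\<forall>c. \<forall>x\<in>acarr A. f (asmul A c x) = asmul B c (f x)"
     "\<forall>x\<in>acarr A. \<forall>y\<in>acarr A. f (amul A x y) = amul B (f x) (f y)"
     "f (aone A) = aone B" using iso by (auto simp: alg_iso_def)
  have c: "\<forall>x\<in>acarr A. \<forall>y\<in>acarr A. aadd A x y \<in> acarr A"
     "\<forall>c. \<forall>x\<in>acarr A. asmul A c x \<in> acarr A"
     "\<forall>x\<in>acarr A. \<forall>y\<in>acarr A. amul A x y \<in> acarr A"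
     "aone A \<in> acarr A" using cl by (auto simp: ops_closed_def)
  show ?thesis unfolding alg_iso_def
  proof (intro conjI ballI allI)
    show "bij_betw ?g (acarr B) (acarr A)" using bij by (rule bij_betw_inv_into)
  next
    fix x' y' assume a: "x' \<in> acarr B" "y' \<in> acarr B"
    have "aadd B x' y' = f (aadd A (?g x') (?g y'))" using a h(1) gA fg by simp
    then show "?g (aadd B x' y') = aadd A (?g x') (?g y')" using gf c(1) gA a by simp
  next
    fix cc x' assume a: "x' \<in> acarr B"
    have "asmul B cc x' = f (asmul A cc (?g x'))" using a h(2) gA fg by simp
    then show "?g (asmul B cc x') = asmul A cc (?g x')" using gf c(2) gA a by simp
  next
    fix x' y' assume a: "x' \<in> acarr B" "y' \<in> acarr B"
    have "amul B x' y' = f (amul A (?g x') (?g y'))" using a h(3) gA fg by simp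
    then show "?g (amul B x' y') = amul A (?g x') (?g y')" using gf c(3) gA a by simp
  next
    show "?g (aone B) = aone A" using h(4) gf c(4) by metis
  qed
qed

lemma quot_iso:
  assumes cl: "ops_closed A"
    and kc: "\<forall>x\<in>acarr A. \<kappa> x \<in> acarr M"
    and ks: "\<forall>m\<in>acarr M. \<exists>x\<in>acarr A. \<kappa> x = m"
    and hadd: "\<forall>x\<in>acarr A. \<forall>y\<in>acarr A. \<kappa> (aadd A x y) = aadd M (\<kappa> x) (\<kappa> y)"
    and hsm: "\<forall>c. \<forall>x\<in>acarr A. \<kappa> (asmul A c x) = asmul M c (\<kappa> x)"
    and hmul: "\<forall>x\<in>acarr A. \<forall>y\<in>acarr A. \<kappa> (amul A x y) = amul M (\<kappa> x) (\<kappa> y)"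
    and hone: "\<kappa> (aone A) = aone M"
    and ker: "\<forall>x\<in>acarr A. \<forall>y\<in>acarr A. asub A y x \<in> J \<longleftrightarrow> \<kappa> y = \<kappa> x"
  shows "alg_iso (quot_alg A J) M (\<lambda>X. \<kappa> (qrep X)) \<and> ops_closed (quot_alg A J)"
proof -
  have c: "\<forall>x\<in>acarr A. \<forall>y\<in>acarr A. aadd A x y \<in> acarr A"
     "\<forall>c. \<forall>x\<in>acarr A. asmul A c x \<in> acarr A"
     "\<forall>x\<in>acarr A. \<forall>y\<in>acarr A. amul A x y \<in> acarr A"
     "aone A \<in> acarr A" using cl by (auto simp: ops_closed_def)
  have qc: "x \<in> acarr A \<Longrightarrow> qcoset A J x = {y \<in> acarr A. \<kappa> y = \<kappa> x}" for x
    using ker by (auto simp: qcoset_def)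
  have qr: "x \<in> acarr A \<Longrightarrow> qrep (qcoset A J x) \<in> acarr A \<and> \<kappa> (qrep (qcoset A J x)) = \<kappa> x" for x
  proof -
    assume x: "x \<in> acarr A"
    have "x \<in> qcoset A J x" using qc[OF x] x by simp
    then have "qrep (qcoset A J x) \<in> qcoset A J x" unfolding qrep_def by (rule someI)
    then show ?thesis using qc[OF x] by simp
  qed
  have qeq: "qcoset A J x = qcoset A J y \<longleftrightarrow> \<kappa> x = \<kappa> y" if xy: "x \<in> acarr A" "y \<in> acarr A" for x y
  proof -
    have e: "qcoset A J x = {z\<in>acarr A. \<kappa> z = \<kappa> x}" "qcoset A J y = {z \<in> acarr A. \<kappa> z = \<kappa> y}"
      using qc xy by auto
    show ?thesis
    proof
      assume "qcoset A J x = qcoset A J y"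
      then have "x \<in> {z \<in> acarr A. \<kappa> z = \<kappa> y}" using e xy by auto
      then show "\<kappa> x = \<kappa> y" by simp
    next
      assume "\<kappa> x = \<kappa> y" then show "qcoset A J x = qcoset A J y" using e by simp
    qed
  qed
  have carrQ: "acarr (quot_alg A J) = qcoset A J ` acarr A" by (simp add: quot_alg_def)
  have ops: "aadd (quot_alg A J) X Y = qcoset A J (aadd A (qrep X) (qrep Y))"
     "asmul (quot_alg A J) cc X = qcoset A J (asmul A cc (qrep X))"
     "amul (quot_alg A J) X Y = qcoset A J (amul A (qrep X) (qrep Y))"
     "aone (quot_alg A J) = qcoset A J (aone A)" for X Y cc by (simp_all add: quot_alg_def)
  have iso: "alg_iso (quot_alg A J) M (\<lambda>X. \<kappa> (qrep X))"
    unfolding alg_iso_def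
  proof (intro conjI ballI allI)
    show "bij_betw (\<lambda>X. \<kappa> (qrep X)) (acarr (quot_alg A J)) (acarr M)"
      unfolding bij_betw_def carrQ
    proof
      show "inj_on (\<lambda>X. \<kappa> (qrep X)) (qcoset A J ` acarr A)"
      proof (rule inj_onI)
        fix X Y assume a: "X \<in> qcoset A J ` acarr A" "Y \<in> qcoset A J ` acarr A" "\<kappa> (qrep X) = \<kappa> (qrep Y)"
        then obtain x y where xy: "x \<in> acarr A" "y \<in> acarr A" "X = qcoset A J x" "Y = qcoset A J y" by auto
        then have "\<kappa> x = \<kappa> y" using a(3) qr by simp
        then show "X = Y" using qeq xy by simp
      qed
      show "(\<lambda>X. \<kappa> (qrep X)) ` qcoset A J ` acarr A = acarr M"
      proof
        show "(\<lambda>X. \<kappa> (qrep X)) ` qcoset A J ` acarr A \<subseteq> acarr M" using qr kc by auto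
        show "acarr M \<subseteq> (\<lambda>X. \<kappa> (qrep X)) ` qcoset A J ` acarr A"
        proof
          fix m assume "m \<in> acarr M"
          then obtain x where "x \<in> acarr A" "\<kappa> x = m" using ks by blast
          then show "m \<in> (\<lambda>X. \<kappa> (qrep X)) ` qcoset A J ` acarr A" using qr by force
        qed
      qed
    qed
  next
    fix X Y assume "X \<in> acarr (quot_alg A J)" "Y \<in> acarr (quot_alg A J)"
    then obtain x y where xy: "x \<in> acarr A" "y \<in> acarr A" "X = qcoset A J x" "Y = qcoset A J y"
      using carrQ by auto
    show "\<kappa> (qrep (aadd (quot_alg A J) X Y)) = aadd M (\<kappa> (qrep X)) (\<kappa> (qrep Y))"
      using xy qr c hadd by (simp add: ops)
    show "\<kappa> (qrep (amul (quot_alg A J) X Y)) = amul M (\<kappa> (qrep X)) (\<kappa> (qrep Y))"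
      using xy qr c hmul by (simp add: ops)
  next
    fix cc X assume "X \<in> acarr (quot_alg A J)"
    then obtain x where xy: "x \<in> acarr A" "X = qcoset A J x"
      using carrQ by auto
    show "\<kappa> (qrep (asmul (quot_alg A J) cc X)) = asmul M cc (\<kappa> (qrep X))"
      using xy qr c hsm by (simp add: ops)
  next
    show "\<kappa> (qrep (aone (quot_alg A J))) = aone M" using qr c hone by (simp add: ops)
  qed
  have "ops_closed (quot_alg A J)"
    unfolding ops_closed_def carrQ
  proof (intro conjI ballI allI)
    fix X Y assume "X \<in> qcoset A J ` acarr A" "Y \<in> qcoset A J ` acarr A"
    then obtain x y where xy: "x \<in> acarr A" "y \<in> acarr A" "X = qcoset A J x" "Y = qcoset A J y"
      by auto
    show "aadd (quot_alg A J) X Y \<in> qcoset A J ` acarr A" using xy qr c by (simp add: ops)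
    show "amul (quot_alg A J) X Y \<in> qcoset A J ` acarr A" using xy qr c by (simp add: ops)
  next
    fix cc X assume "X \<in> qcoset A J ` acarr A"
    then obtain x where xy: "x \<in> acarr A" "X = qcoset A J x" by auto
    show "asmul (quot_alg A J) cc X \<in> qcoset A J ` acarr A" using xy qr c by (simp add: ops)
  next
    show "aone (quot_alg A J) \<in> qcoset A J ` acarr A" using c by (simp add: ops)
  qed
  with iso show ?thesis by simp
qed

lemma gen_ideal_props:
  assumes "is_ideal A (acarr A)" "S \<subseteq> acarr A"
  shows "is_ideal A (gen_ideal A S)" "S \<subseteq> gen_ideal A S" "gen_ideal A S \<subseteq> acarr A"
proof -
  let ?F = "{J. is_ideal A J \<and> S \<subseteq> J}"
  have ne: "acarr A \<in> ?F" using assms by simp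
  show "S \<subseteq> gen_ideal A S" unfolding gen_ideal_def by auto
  show "gen_ideal A S \<subseteq> acarr A" unfolding gen_ideal_def using ne by auto
  have all: "\<forall>J\<in>?F. is_ideal A J" by simp
  show "is_ideal A (gen_ideal A S)" unfolding gen_ideal_def is_ideal_def[of A "\<Inter> ?F"]
  proof (intro conjI ballI allI)
    show "\<Inter> ?F \<subseteq> acarr A" using ne by auto
  qed (use all in \<open>auto simp: is_ideal_def\<close>)
qed

lemma gen_ideal_least: "is_ideal A J \<Longrightarrow> S \<subseteq> J \<Longrightarrow> gen_ideal A S \<subseteq> J"
  unfolding gen_ideal_def by auto

lemma pa_carrD: assumes "f \<in> acarr (path_alg Q)" "\<not> is_path Q p" shows "f p = 0"
proof -
  have "\<forall>p. \<not> is_path Q p \<longrightarrow> f p = 0" using assms(1) unfolding pa_simps by blast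
  then show ?thesis using assms(2) by blast
qed

lemma pa_ideal_carr: "is_ideal (path_alg Q) (acarr (path_alg Q))"
  unfolding is_ideal_def
  apply (intro conjI ballI allI)
       apply (rule subset_refl)
      apply (simp only: pa_simps(3), rule pa_zero_closed)
     apply (simp only: pa_simps(2), rule pa_add_closed; assumption)
    apply (simp only: pa_simps(4), rule pa_smul_closed; assumption)
   apply (rule pa_mul_closed; assumption)
  apply (rule pa_mul_closed; assumption)
  done

lemma asub_pa[simp]: "asub (path_alg Q) y x = (\<lambda>p. y p - x p)"
  by (simp add: asub_def)

lemma ideal_pa_facts:
  assumes "is_ideal (path_alg Q) J"
  shows "J \<subseteq> acarr (path_alg Q)" "(\<lambda>p. 0) \<in> J"
    "x \<in> J \<Longrightarrow> y \<in> J \<Longrightarrow> (\<lambda>p. x p + y p) \<in> J"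
    "x \<in> J \<Longrightarrow> (\<lambda>p. c * x p) \<in> J"
    "a \<in> acarr (path_alg Q) \<Longrightarrow> x \<in> J \<Longrightarrow> amul (path_alg Q) a x \<in> J"
    "a \<in> acarr (path_alg Q) \<Longrightarrow> x \<in> J \<Longrightarrow> amul (path_alg Q) x a \<in> J"
  using assms unfolding is_ideal_def by auto

lemma ideal_pa_diff:
  assumes "is_ideal (path_alg Q) J" "x \<in> J" "y \<in> J"
  shows "(\<lambda>p. x p - y p) \<in> J"
proof -
  have "(\<lambda>p. x p + (-1) * y p) \<in> J" using ideal_pa_facts[OF assms(1)] assms(2,3) by blast
  then show ?thesis by simp
qed

lemma supp_induct_J:
  assumes J: "is_ideal (path_alg Q) J"
    and kadd: "\<forall>x\<in>acarr (path_alg Q). \<forall>y\<in>acarr (path_alg Q). \<kappa> (\<lambda>p. x p + y p) = (\<lambda>b. \<kappa> x b + \<kappa> y b)"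
    and ksm: "\<forall>c. \<forall>x\<in>acarr (path_alg Q). \<kappa> (\<lambda>p. c * x p) = (\<lambda>b. c * \<kappa> x b)"
    and Radd: "\<forall>c d. R (\<lambda>b. c b + d b) = (\<lambda>p. R c p + R d p)"
    and Rsm: "\<forall>s c. R (\<lambda>b. s * c b) = (\<lambda>p. s * R c p)"
    and pths: "\<forall>p. is_path Q p \<longrightarrow> (\<lambda>q. (pth p q :: 'k::field) - R (\<kappa> (pth p)) q) \<in> J"
  shows "z \<in> acarr (path_alg Q) \<Longrightarrow> (\<lambda>q. z q - R (\<kappa> z) q) \<in> J"
proof -
  have k0: "\<kappa> (\<lambda>p. 0) = (\<lambda>b. 0)"
    using ksm[rule_format, of "\<lambda>p. 0" 0] by simp
  have R0: "R (\<lambda>b. 0) = (\<lambda>p. 0)"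
    using Rsm[rule_format, of 0 "\<lambda>b. 0"] by simp
  have main: "finite S \<Longrightarrow> \<forall>z. z \<in> acarr (path_alg Q) \<and> {p. z p \<noteq> 0} \<subseteq> S \<longrightarrow> (\<lambda>q. z q - R (\<kappa> z) q) \<in> J" for S
  proof (induction S rule: finite_induct)
    case empty
    show ?case
    proof (intro allI impI)
      fix z :: "_ \<Rightarrow> 'k" assume "z \<in> acarr (path_alg Q) \<and> {p. z p \<noteq> 0} \<subseteq> {}"
      then have "z = (\<lambda>p. 0)" by auto
      then show "(\<lambda>q. z q - R (\<kappa> z) q) \<in> J" using k0 R0 ideal_pa_facts(2)[OF J] by simp
    qed
  next
    case (insert p S)
    show ?case
    proof (intro allI impI)
      fix z :: "_ \<Rightarrow> 'k" assume z: "z \<in> acarr (path_alg Q) \<and> {p. z p \<noteq> 0} \<subseteq> insert p S"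
      let ?z' = "\<lambda>q. if q = p then 0 else z q"
      have z'c: "?z' \<in> acarr (path_alg Q)"
      proof -
        have "{q. ?z' q \<noteq> 0} \<subseteq> {q. z q \<noteq> 0}" by auto
        then show ?thesis using z by (auto intro: finite_subset)
      qed
      have z's: "{q. ?z' q \<noteq> 0} \<subseteq> S" using z by auto
      have IH: "(\<lambda>q. ?z' q - R (\<kappa> ?z') q) \<in> J" using insert.IH z'c z's by blast
      show "(\<lambda>q. z q - R (\<kappa> z) q) \<in> J"
      proof (cases "is_path Q p")
        case False
        then have "z p = 0" using z pa_carrD by blast
        then have e: "?z' = z" by (auto simp: fun_eq_iff)
        have "(\<lambda>q. ?z' q - R (\<kappa> ?z') q) = (\<lambda>q. z q - R (\<kappa> z) q)"
          by (subst e) (use \<open>z p = 0\<close> in \<open>auto simp: fun_eq_iff\<close>)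
        then show ?thesis using IH by simp
      next
        case True
        have pc: "(pth p :: _ \<Rightarrow> 'k) \<in> acarr (path_alg Q)" using True by (rule pth_closed)
        have pc2: "(\<lambda>q. z p * pth p q) \<in> acarr (path_alg Q)" using pc by (rule pa_smul_closed)
        have zd: "z = (\<lambda>q. ?z' q + z p * pth p q)" by (auto simp: pth_def)
        have "\<kappa> z = (\<lambda>b. \<kappa> ?z' b + z p * \<kappa> (pth p) b)"
          apply (subst zd) using kadd z'c pc2 ksm pc by simp
        then have Rk: "R (\<kappa> z) = (\<lambda>q. R (\<kappa> ?z') q + z p * R (\<kappa> (pth p)) q)"
          using Radd Rsm by simp
        have e: "(\<lambda>q. z q - R (\<kappa> z) q) = (\<lambda>q. (?z' q - R (\<kappa> ?z') q) + z p * (pth p q - R (\<kappa> (pth p)) q))"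
          by (rule ext) (simp add: Rk pth_def algebra_simps)
        have "(\<lambda>q. z p * (pth p q - R (\<kappa> (pth p)) q)) \<in> J"
          using ideal_pa_facts(4)[OF J] pths True by blast
        then show ?thesis unfolding e using ideal_pa_facts(3)[OF J] IH by blast
      qed
    qed
  qed
  assume "z \<in> acarr (path_alg Q)"
  then show ?thesis using main[of "{p. z p \<noteq> 0}"] by simp
qed


declare pa_simps(1)[simp del]

context
  fixes Q :: "('v, 'e) quiver" and J :: "('v \<times> 'e list \<Rightarrow> 'k::field) set"
  assumes J: "is_ideal (path_alg Q) J"
begin

lemma q_rep:
  assumes x: "x \<in> acarr (path_alg Q)"
  shows "qrep (qcoset (path_alg Q) J x) \<in> acarr (path_alg Q)"
    "(\<lambda>p. qrep (qcoset (path_alg Q) J x) p - x p) \<in> J"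
proof -
  have "(\<lambda>p. x p - x p) \<in> J" using ideal_pa_facts(2)[OF J] by simp
  then have "x \<in> qcoset (path_alg Q) J x" using x by (simp add: qcoset_def)
  then have "qrep (qcoset (path_alg Q) J x) \<in> qcoset (path_alg Q) J x" unfolding qrep_def
    by (rule someI[where P="\<lambda>z. z \<in> qcoset (path_alg Q) J x"])
  then show "qrep (qcoset (path_alg Q) J x) \<in> acarr (path_alg Q)"
    "(\<lambda>p. qrep (qcoset (path_alg Q) J x) p - x p) \<in> J" by (simp_all add: qcoset_def)
qed

lemma q_eqI:
  assumes "x \<in> acarr (path_alg Q)" "y \<in> acarr (path_alg Q)" "(\<lambda>p. y p - x p) \<in> J"
  shows "qcoset (path_alg Q) J y = qcoset (path_alg Q) J x"
proof -
  have "(\<lambda>p. z p - y p) \<in> J \<longleftrightarrow> (\<lambda>p. z p - x p) \<in> J" for z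
  proof
    assume "(\<lambda>p. z p - y p) \<in> J"
    from ideal_pa_facts(3)[OF J this assms(3)] show "(\<lambda>p. z p - x p) \<in> J" by simp
  next
    assume "(\<lambda>p. z p - x p) \<in> J"
    from ideal_pa_diff[OF J this assms(3)] show "(\<lambda>p. z p - y p) \<in> J" by simp
  qed
  then show ?thesis by (simp add: qcoset_def)
qed

lemma q_add:
  assumes x: "x \<in> acarr (path_alg Q)" and y: "y \<in> acarr (path_alg Q)"
  shows "aadd (quot_alg (path_alg Q) J) (qcoset (path_alg Q) J x) (qcoset (path_alg Q) J y)
       = qcoset (path_alg Q) J (\<lambda>p. x p + y p)"
proof -
  let ?x' = "qrep (qcoset (path_alg Q) J x)" and ?y' = "qrep (qcoset (path_alg Q) J y)"
  have "(\<lambda>p. (?x' p + ?y' p) - (x p + y p)) \<in> J"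
    using ideal_pa_facts(3)[OF J q_rep(2)[OF x] q_rep(2)[OF y]] by (simp add: algebra_simps)
  then have "qcoset (path_alg Q) J (\<lambda>p. ?x' p + ?y' p) = qcoset (path_alg Q) J (\<lambda>p. x p + y p)"
    using q_eqI pa_add_closed q_rep(1) x y by blast
  moreover have "aadd (quot_alg (path_alg Q) J) (qcoset (path_alg Q) J x) (qcoset (path_alg Q) J y)
      = qcoset (path_alg Q) J (\<lambda>p. ?x' p + ?y' p)" by (simp add: quot_alg_def)
  ultimately show ?thesis by simp
qed

lemma q_smul:
  assumes x: "x \<in> acarr (path_alg Q)"
  shows "asmul (quot_alg (path_alg Q) J) c (qcoset (path_alg Q) J x)
       = qcoset (path_alg Q) J (\<lambda>p. c * x p)"
proof -
  let ?x' = "qrep (qcoset (path_alg Q) J x)"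
  have "(\<lambda>p. c * ?x' p - c * x p) \<in> J"
    using ideal_pa_facts(4)[OF J q_rep(2)[OF x], of c] by (simp add: algebra_simps)
  then have "qcoset (path_alg Q) J (\<lambda>p. c * ?x' p) = qcoset (path_alg Q) J (\<lambda>p. c * x p)"
    using q_eqI pa_smul_closed q_rep(1) x by blast
  moreover have "asmul (quot_alg (path_alg Q) J) c (qcoset (path_alg Q) J x)
      = qcoset (path_alg Q) J (\<lambda>p. c * ?x' p)" by (simp add: quot_alg_def)
  ultimately show ?thesis by simp
qed

lemma q_mul:
  assumes x: "x \<in> acarr (path_alg Q)" and y: "y \<in> acarr (path_alg Q)"
  shows "amul (quot_alg (path_alg Q) J) (qcoset (path_alg Q) J x) (qcoset (path_alg Q) J y)
       = qcoset (path_alg Q) J (amul (path_alg Q) x y)"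
proof -
  let ?x' = "qrep (qcoset (path_alg Q) J x)" and ?y' = "qrep (qcoset (path_alg Q) J y)"
  let ?M = "amul (path_alg Q)"
  have x'c: "?x' \<in> acarr (path_alg Q)" and y'c: "?y' \<in> acarr (path_alg Q)" using q_rep x y by auto
  have e1: "?M ?x' ?y' = (\<lambda>p. ?M (\<lambda>q. ?x' q - x q) ?y' p + ?M x ?y' p)"
  proof -
    have "?x' = (\<lambda>q. (?x' q - x q) + x q)" by simp
    then have "?M ?x' ?y' = ?M (\<lambda>q. (?x' q - x q) + x q) ?y'" by simp
    then show ?thesis by (simp only: pa_mul_add_left)
  qed
  have e2: "?M x ?y' = (\<lambda>p. ?M x (\<lambda>q. ?y' q - y q) p + ?M x y p)"
  proof -
    have "?y' = (\<lambda>q. (?y' q - y q) + y q)" by simp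
    then have "?M x ?y' = ?M x (\<lambda>q. (?y' q - y q) + y q)" by simp
    then show ?thesis by (simp only: pa_mul_add_right)
  qed
  have a: "?M (\<lambda>q. ?x' q - x q) ?y' \<in> J" using ideal_pa_facts(6)[OF J y'c q_rep(2)[OF x]] .
  have b: "?M x (\<lambda>q. ?y' q - y q) \<in> J" using ideal_pa_facts(5)[OF J x q_rep(2)[OF y]] .
  have "(\<lambda>p. ?M ?x' ?y' p - ?M x y p) = (\<lambda>p. ?M (\<lambda>q. ?x' q - x q) ?y' p + ?M x (\<lambda>q. ?y' q - y q) p)"
    by (simp add: e1 e2)
  then have "(\<lambda>p. ?M ?x' ?y' p - ?M x y p) \<in> J" using ideal_pa_facts(3)[OF J a b] by simp
  then have "qcoset (path_alg Q) J (?M ?x' ?y') = qcoset (path_alg Q) J (?M x y)"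
    using q_eqI[of "?M x y" "?M ?x' ?y'"] pa_mul_closed x'c y'c x y by blast
  moreover have "amul (quot_alg (path_alg Q) J) (qcoset (path_alg Q) J x) (qcoset (path_alg Q) J y)
      = qcoset (path_alg Q) J (?M ?x' ?y')" by (simp add: quot_alg_def)
  ultimately show ?thesis by simp
qed

lemma q_carr: "acarr (quot_alg (path_alg Q) J) = qcoset (path_alg Q) J ` acarr (path_alg Q)"
  by (simp add: quot_alg_def)

lemma q_one: "aone (quot_alg (path_alg Q) J) = qcoset (path_alg Q) J (aone (path_alg Q))"
  by (simp add: quot_alg_def)

lemma q_zero: "azero (quot_alg (path_alg Q) J) = qcoset (path_alg Q) J (\<lambda>p. 0)"
  by (simp add: quot_alg_def)

lemma q_zero_mem:
  assumes "x \<in> acarr (path_alg Q)" "qcoset (path_alg Q) J x = qcoset (path_alg Q) J (\<lambda>p. 0)"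
  shows "x \<in> J"
proof -
  have "(\<lambda>p. x p - x p) \<in> J" using ideal_pa_facts(2)[OF J] by simp
  then have "x \<in> qcoset (path_alg Q) J x" using assms(1) by (simp add: qcoset_def)
  then have "x \<in> qcoset (path_alg Q) J (\<lambda>p. 0)" using assms(2) by simp
  then show ?thesis by (simp add: qcoset_def)
qed

lemma jrad_sqzero:
  assumes Q: "tgt_ok Q" "finite (verts Q)"
    and x: "x \<in> acarr (path_alg Q)"
    and sq: "\<forall>y\<in>acarr (path_alg Q). amul (path_alg Q) (amul (path_alg Q) y x) (amul (path_alg Q) y x) = (\<lambda>p. 0)"
  shows "qcoset (path_alg Q) J x \<in> jrad (quot_alg (path_alg Q) J)"
proof -
  let ?A = "quot_alg (path_alg Q) J" and ?M = "amul (path_alg Q)" and ?q = "qcoset (path_alg Q) J"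
  let ?o = "aone (path_alg Q)"
  have oc: "?o \<in> acarr (path_alg Q)" using pa_one_closed[OF Q(2)] by simp
  have vanish: "f \<in> acarr (path_alg Q) \<Longrightarrow> \<forall>p. \<not> is_path Q p \<longrightarrow> f p = 0" for f
    using pa_carrD by blast
  show ?thesis unfolding jrad_def
  proof (intro CollectI conjI ballI)
    show "?q x \<in> acarr ?A" using x q_carr by simp
  next
    fix Y assume "Y \<in> acarr ?A"
    then obtain y where y: "y \<in> acarr (path_alg Q)" "Y = ?q y" using q_carr by auto
    define h where "h = ?M y x"
    have hc: "h \<in> acarr (path_alg Q)" unfolding h_def using pa_mul_closed y x by blast
    have hh: "?M h h = (\<lambda>p. 0)" using sq y unfolding h_def by blast
    define u where "u = (\<lambda>p. ?o p + (-1) * h p)"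
    define w where "w = (\<lambda>p. ?o p + h p)"
    have uc: "u \<in> acarr (path_alg Q)" unfolding u_def using pa_add_closed pa_smul_closed oc hc by blast
    have wc: "w \<in> acarr (path_alg Q)" unfolding w_def using pa_add_closed oc hc by blast
    have e: "asub ?A (aone ?A) (amul ?A Y (?q x)) = ?q u"
      unfolding asub_def y(2) q_mul[OF y(1) x] h_def[symmetric] q_one q_smul[OF hc]
        q_add[OF oc pa_smul_closed[OF hc]] u_def ..
    have m1: "?M w u = ?o"
    proof -
      have "?M w u = (\<lambda>p. ?M ?o u p + ?M h u p)" unfolding w_def by (rule pa_mul_add_left)
      also have "?M ?o u = u" using pa_one_left[OF vanish[OF uc] Q(1)] .
      also have "?M h u = (\<lambda>p. ?M h ?o p + ?M h (\<lambda>p. (-1) * h p) p)" unfolding u_def by (rule pa_mul_add_right)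
      also have "?M h ?o = h" using pa_one_right[OF vanish[OF hc] Q(1)] .
      also have "?M h (\<lambda>p. (-1) * h p) = (\<lambda>p. (-1) * ?M h h p)" by (rule pa_mul_smul_right)
      finally show ?thesis unfolding u_def hh by simp
    qed
    have m2: "?M u w = ?o"
    proof -
      have "?M u w = (\<lambda>p. ?M ?o w p + ?M (\<lambda>p. (-1) * h p) w p)" unfolding u_def by (rule pa_mul_add_left)
      also have "?M ?o w = w" using pa_one_left[OF vanish[OF wc] Q(1)] .
      also have "?M (\<lambda>p. (-1) * h p) w = (\<lambda>p. (-1) * ?M h w p)" by (rule pa_mul_smul_left)
      also have "?M h w = (\<lambda>p. ?M h ?o p + ?M h h p)" unfolding w_def by (rule pa_mul_add_right)
      also have "?M h ?o = h" using pa_one_right[OF vanish[OF hc] Q(1)] .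
      finally show ?thesis unfolding w_def hh by simp
    qed
    show "\<exists>z\<in>acarr ?A. amul ?A z (asub ?A (aone ?A) (amul ?A Y (?q x))) = aone ?A \<and>
                        amul ?A (asub ?A (aone ?A) (amul ?A Y (?q x))) z = aone ?A"
    proof (intro bexI conjI)
      show "?q w \<in> acarr ?A" using wc q_carr by simp
      show "amul ?A (?q w) (asub ?A (aone ?A) (amul ?A Y (?q x))) = aone ?A"
        unfolding e unfolding q_mul[OF wc uc] m1 q_one ..
      show "amul ?A (asub ?A (aone ?A) (amul ?A Y (?q x))) (?q w) = aone ?A"
        unfolding e unfolding q_mul[OF uc wc] m2 q_one ..
    qed
  qed
qed

end


lemma pa_mul_len0:
  "is_path Q (v, []) \<Longrightarrow> amul (path_alg Q) x y (v, []) = x (v, []) * y (v, [])"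
  by (simp add: pa_mul)

lemma pa_mul_len1:
  "is_path Q (v, [a]) \<Longrightarrow> amul (path_alg Q) x y (v, [a]) = x (v, []) * y (v, [a]) + x (v, [a]) * y (tgt Q a, [])"
  by (simp add: pa_mul atLeast0_atMost_Suc)

lemma pa_mul_len2:
  "is_path Q (v, [a, b]) \<Longrightarrow> amul (path_alg Q) x y (v, [a, b]) =
     x (v, []) * y (v, [a, b]) + x (v, [a]) * y (tgt Q a, [b]) + x (v, [a, b]) * y (tgt Q b, [])"
  by (simp add: pa_mul atLeast0_atMost_Suc numeral_2_eq_2 algebra_simps)

definition Rg :: "'b set \<Rightarrow> ('b \<Rightarrow> 'v \<times> 'e list) \<Rightarrow> ('b \<Rightarrow> 'k::field) \<Rightarrow> ('v \<times> 'e list \<Rightarrow> 'k)" where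
  "Rg B pp c = (\<lambda>p. \<Sum>b\<in>B. c b * pth (pp b) p)"

lemma Rg_add: "Rg B pp (\<lambda>b. c b + d b) = (\<lambda>p. Rg B pp c p + Rg B pp d p)"
  by (auto simp: Rg_def sum.distrib[symmetric] algebra_simps)

lemma Rg_smul: "Rg B pp (\<lambda>b. s * c b) = (\<lambda>p. s * Rg B pp c p)"
  by (auto simp: Rg_def sum_distrib_left algebra_simps)

lemma Rg_at:
  assumes "finite B" "inj_on pp B" "b0 \<in> B"
  shows "Rg B pp c (pp b0) = c b0"
proof -
  have "Rg B pp c (pp b0) = (\<Sum>b\<in>B. c b * pth (pp b) (pp b0))" by (simp add: Rg_def)
  also have "\<dots> = c b0 * pth (pp b0) (pp b0)"
  proof (rule sum_single_nz)
    show "\<forall>k\<in>B. k \<noteq> b0 \<longrightarrow> c k * pth (pp k) (pp b0) = 0"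
      using assms(2,3) by (simp add: pth_def inj_on_def)
  qed (use assms in auto)
  finally show ?thesis by (simp add: pth_def)
qed

lemma Rg_out:
  assumes "q \<notin> pp ` B"
  shows "Rg B pp c q = 0"
proof -
  have "\<forall>b\<in>B. pp b \<noteq> q" using assms by blast
  then have "\<forall>b\<in>B. c b * pth (pp b) q = 0" unfolding pth_def by auto
  then show ?thesis unfolding Rg_def by (rule sum.neutral)
qed

lemma Rg_carr:
  assumes "finite B" "\<forall>b\<in>B. is_path Q (pp b)"
  shows "Rg B pp c \<in> acarr (path_alg Q)"
proof -
  have sub: "{p. Rg B pp c p \<noteq> 0} \<subseteq> pp ` B" using Rg_out by blast
  have fin: "finite (pp ` B)" using assms(1) by simp
  have f2: "finite {p. Rg B pp c p \<noteq> 0}" by (rule finite_subset[OF sub fin])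
  have van: "\<forall>p. \<not> is_path Q p \<longrightarrow> Rg B pp c p = 0"
  proof (intro allI impI)
    fix p assume "\<not> is_path Q p"
    then have "p \<notin> pp ` B" using assms(2) by auto
    then show "Rg B pp c p = 0" by (rule Rg_out)
  qed
  show ?thesis unfolding pa_simps(1) using f2 van by blast
qed

lemma Rg_unit:
  assumes "finite B" "inj_on pp B" "b0 \<in> B"
  shows "Rg B pp (\<lambda>b. if b = b0 then 1 else 0) = pth (pp b0)"
proof
  fix q
  show "Rg B pp (\<lambda>b. if b = b0 then 1 else 0) q = pth (pp b0) q"
  proof -
    have "(\<Sum>b\<in>B. (if b = b0 then 1 else 0) * pth (pp b) q) = (if b0 = b0 then 1 else 0) * pth (pp b0) q"
      by (rule sum_single_nz) (use assms in simp_all)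
    then show ?thesis unfolding Rg_def by simp
  qed
qed

lemma Rg_zero: "Rg B pp (\<lambda>b. 0) = (\<lambda>p. 0)"
  by (simp add: Rg_def)

section \<open>The line quiver\<close>

lemma lq_simps[simp]:
  "verts (lineQ n ori) = {1..n}" "arrs (lineQ n ori) = {1..<n}"
  "src (lineQ n ori) j = (if ori j then j else Suc j)"
  "tgt (lineQ n ori) j = (if ori j then Suc j else j)"
  by (simp_all add: lineQ_def)

lemma lq_ok: "tgt_ok (lineQ n ori)" "finite (verts (lineQ n ori))"
  by (auto simp: tgt_ok_def)

lemma lq_Cons: "is_path (lineQ n ori) (v, a # as) \<longleftrightarrow>
   v \<in> {1..n} \<and> a \<in> {1..<n} \<and> (if ori a then a else Suc a) = v \<and> is_path (lineQ n ori) (if ori a then Suc a else a, as)"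
  using is_path_Cons[of "lineQ n ori" v a as] by (auto simp: tgt_ok_def)

lemma lq_mono:
  "is_path (lineQ n ori) (v, xs) \<Longrightarrow> xs \<noteq> [] \<Longrightarrow> i < length xs \<Longrightarrow>
    (ori (hd xs) \<and> xs ! i = hd xs + i \<and> ori (xs ! i)) \<or> (\<not> ori (hd xs) \<and> xs ! i + i = hd xs \<and> \<not> ori (xs ! i))"
proof (induction xs arbitrary: v i)
  case Nil then show ?case by simp
next
  case (Cons a as)
  show ?case
  proof (cases i)
    case 0 then show ?thesis by simp
  next
    case (Suc j)
    then have asne: "as \<noteq> []" and j: "j < length as" using Cons.prems by auto
    have pa: "is_path (lineQ n ori) (if ori a then Suc a else a, as)" and av: "a \<in> {1..<n}"
      using Cons.prems(1) lq_Cons by blast+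
    obtain b bs where as: "as = b # bs" using asne by (cases as) auto
    have sb: "(if ori b then b else Suc b) = (if ori a then Suc a else a)"
      using pa as lq_Cons by blast
    have IH: "(ori b \<and> as ! j = b + j \<and> ori (as ! j)) \<or> (\<not> ori b \<and> as ! j + j = b \<and> \<not> ori (as ! j))"
      using Cons.IH[OF pa asne j] as by simp
    show ?thesis
    proof (cases "ori a")
      case True
      then have "ori b \<and> b = Suc a" using sb by (auto split: if_splits)
      then show ?thesis using IH True Suc by auto
    next
      case False
      then have "\<not> ori b \<and> Suc b = a" using sb by (auto split: if_splits)
      then show ?thesis using IH False Suc by auto
    qed
  qed
qed

lemma lq_distinct:
  assumes "is_path (lineQ n ori) (v, xs)"
  shows "distinct xs"
proof (cases "xs = []")
  case True then show ?thesis by simp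
next
  case False
  show ?thesis unfolding distinct_conv_nth
  proof (intro allI impI)
    fix i j assume ij: "i < length xs" "j < length xs" "i \<noteq> j"
    show "xs ! i \<noteq> xs ! j"
      using lq_mono[OF assms False ij(1)] lq_mono[OF assms False ij(2)] ij(3) by auto
  qed
qed


lemma lq_sq:
  fixes y :: "nat \<times> nat list \<Rightarrow> 'k::field"
  assumes y: "y \<in> acarr (path_alg (lineQ n ori))"
  shows "amul (path_alg (lineQ n ori)) (amul (path_alg (lineQ n ori)) y (pth (s, [a])))
           (amul (path_alg (lineQ n ori)) y (pth (s, [a]))) = (\<lambda>p. 0)"
proof -
  let ?M = "amul (path_alg (lineQ n ori))"
  define h where "h = ?M y (pth (s, [a]))"
  have hs: "snd q \<noteq> [] \<and> last (snd q) = a" if "h q \<noteq> 0" for q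
  proof -
    have "(\<Sum>k\<in>{0..length (snd q)}. y (fst q, take k (snd q)) * (pth (s, [a]) :: _ \<Rightarrow> 'k) (pend (lineQ n ori) (fst q, take k (snd q)), drop k (snd q))) \<noteq> 0"
      using that unfolding h_def pa_mul by (auto split: if_splits)
    then obtain k where "y (fst q, take k (snd q)) * (pth (s, [a]) :: _ \<Rightarrow> 'k) (pend (lineQ n ori) (fst q, take k (snd q)), drop k (snd q)) \<noteq> 0"
      by (meson sum.neutral)
    then have "drop k (snd q) = [a]" by (auto simp: pth_def split: if_splits)
    then show ?thesis by (metis append_take_drop_id last_appendR list.distinct(1) Nil_is_append_conv last_ConsL)
  qed
  have "?M h h p = 0" for p
  proof (cases "is_path (lineQ n ori) p")
    case False then show ?thesis by (simp add: pa_mul)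
  next
    case True
    obtain v xs where p: "p = (v, xs)" by (cases p)
    have dist: "distinct xs" using True p lq_distinct by blast
    have z: "h (v, take k xs) * h (pend (lineQ n ori) (v, take k xs), drop k xs) = 0" for k
    proof (rule ccontr)
      assume "\<not> ?thesis"
      then have a1: "take k xs \<noteq> [] \<and> last (take k xs) = a" and a2: "drop k xs \<noteq> [] \<and> last (drop k xs) = a"
        using hs by fastforce+
      have k1: "1 \<le> k" "k < length xs" using a1 a2 by auto
      have tk: "take k xs \<noteq> []" using a1 by simp
      have "last (take k xs) = take k xs ! (length (take k xs) - 1)" by (rule last_conv_nth[OF tk])
      also have "\<dots> = xs ! (k - 1)" using k1 by simp
      finally have "last (take k xs) = xs ! (k - 1)" .
      moreover have "last (drop k xs) = xs ! (length xs - 1)"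
      proof -
        have "last (drop k xs) = last xs" using k1(2) by (rule last_drop)
        also have "\<dots> = xs ! (length xs - 1)" using k1 by (intro last_conv_nth) auto
        finally show ?thesis .
      qed
      ultimately have "xs ! (k - 1) = xs ! (length xs - 1)" using a1 a2 by simp
      then have "k - 1 = length xs - 1" using dist k1 by (simp add: nth_eq_iff_index_eq)
      then show False using k1 by simp
    qed
    show ?thesis using True p unfolding pa_mul by (simp only: z sum.neutral_const if_True fst_conv snd_conv)
  qed
  then show ?thesis unfolding h_def by auto
qed

lemma gentle_ideal:
  assumes "gentle Q (I :: ('v \<times> 'e list \<Rightarrow> 'k::field) set)"
  shows "is_ideal (path_alg Q) I"
proof -
  obtain R where R: "R \<subseteq> {p. is_path Q p \<and> length (snd p) = 2}" "I = gen_ideal (path_alg Q) (pth ` R)"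
    using assms unfolding gentle_def by blast
  have "pth ` R \<subseteq> acarr (path_alg Q)" using R(1) pth_closed by blast
  then show ?thesis using gen_ideal_props(1)[OF pa_ideal_carr] R(2) by simp
qed

lemma lq_len2_in_I:
  fixes I :: "(nat \<times> nat list \<Rightarrow> 'k::field) set"
  assumes g: "gentle (lineQ n ori) I" and r: "rad_sq_zero (quot_alg (path_alg (lineQ n ori)) I)"
    and p: "is_path (lineQ n ori) (v, a # b # rest)"
  shows "pth (v, a # b # rest) \<in> I"
proof -
  let ?Q = "lineQ n ori"
  have J: "is_ideal (path_alg ?Q) I" using g by (rule gentle_ideal)
  have Q': "\<forall>a\<in>arrs ?Q. tgt ?Q a \<in> verts ?Q" using lq_ok(1) by (simp add: tgt_ok_def)
  have pc: "is_path ?Q (v, [a])" "is_path ?Q (tgt ?Q a, [b])" "is_path ?Q (tgt ?Q b, rest)"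
    using p by (auto simp: is_path_Cons[OF Q'])
  have x1: "(pth (v, [a]) :: _ \<Rightarrow> 'k) \<in> acarr (path_alg ?Q)" using pc(1) by (rule pth_closed)
  have x2: "(pth (tgt ?Q a, [b]) :: _ \<Rightarrow> 'k) \<in> acarr (path_alg ?Q)" using pc(2) by (rule pth_closed)
  have j1: "qcoset (path_alg ?Q) I (pth (v, [a])) \<in> jrad (quot_alg (path_alg ?Q) I)"
    using jrad_sqzero[OF J lq_ok x1] lq_sq by blast
  have j2: "qcoset (path_alg ?Q) I (pth (tgt ?Q a, [b])) \<in> jrad (quot_alg (path_alg ?Q) I)"
    using jrad_sqzero[OF J lq_ok x2] lq_sq by blast
  have m: "amul (path_alg ?Q) (pth (v, [a])) (pth (tgt ?Q a, [b])) = (pth (v, [a, b]) :: _ \<Rightarrow> 'k)"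
    using pth_mult[OF lq_ok(1) pc(1) pc(2)] by simp
  have "amul (quot_alg (path_alg ?Q) I) (qcoset (path_alg ?Q) I (pth (v, [a]))) (qcoset (path_alg ?Q) I (pth (tgt ?Q a, [b])))
     = azero (quot_alg (path_alg ?Q) I)"
    using r j1 j2 unfolding rad_sq_zero_def by blast
  then have "qcoset (path_alg ?Q) I (pth (v, [a, b])) = qcoset (path_alg ?Q) I (\<lambda>p. 0)"
    unfolding q_mul[OF J x1 x2] m q_zero[OF J] .
  moreover have pab: "is_path ?Q (v, [a, b])" using p pc by (auto simp: is_path_Cons[OF Q'])
  ultimately have ab: "(pth (v, [a, b]) :: _ \<Rightarrow> 'k) \<in> I" using q_zero_mem[OF J] pth_closed by blast
  have "amul (path_alg ?Q) (pth (v, [a, b])) (pth (tgt ?Q b, rest)) = (pth (v, a # b # rest) :: _ \<Rightarrow> 'k)"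
    using pth_mult[OF lq_ok(1) pab pc(3)] by simp
  moreover have "amul (path_alg ?Q) (pth (v, [a, b])) (pth (tgt ?Q b, rest)) \<in> I"
    using ideal_pa_facts(6)[OF J pth_closed[OF pc(3)] ab] .
  ultimately show ?thesis by simp
qed

section \<open>Model of A\<close>

datatype aidx = AV nat | AR nat

definition BAs :: "nat \<Rightarrow> aidx set" where
  "BAs n = AV ` {1..n} \<union> AR ` {1..<n}"

definition vcarr :: "'b set \<Rightarrow> ('b \<Rightarrow> 'k::field) set" where
  "vcarr B = {c. \<forall>b. b \<notin> B \<longrightarrow> c b = 0}"

definition ppA :: "(nat \<Rightarrow> bool) \<Rightarrow> aidx \<Rightarrow> nat \<times> nat list" where
  "ppA ori b = (case b of AV i \<Rightarrow> (i, []) | AR j \<Rightarrow> (if ori j then j else Suc j, [j]))"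

definition kA :: "nat \<Rightarrow> (nat \<Rightarrow> bool) \<Rightarrow> (nat \<times> nat list \<Rightarrow> 'k::field) \<Rightarrow> aidx \<Rightarrow> 'k" where
  "kA n ori x = (\<lambda>b. if b \<in> BAs n then x (ppA ori b) else 0)"

definition mulA :: "nat \<Rightarrow> (nat \<Rightarrow> bool) \<Rightarrow> (aidx \<Rightarrow> 'k::field) \<Rightarrow> (aidx \<Rightarrow> 'k) \<Rightarrow> aidx \<Rightarrow> 'k" where
  "mulA n ori c d = (\<lambda>b. if b \<in> BAs n then (case b of AV i \<Rightarrow> c (AV i) * d (AV i)
      | AR j \<Rightarrow> c (AV (if ori j then j else Suc j)) * d (AR j) + c (AR j) * d (AV (if ori j then Suc j else j))) else 0)"

definition modelA :: "nat \<Rightarrow> (nat \<Rightarrow> bool) \<Rightarrow> ('k::field, aidx \<Rightarrow> 'k) kalg" where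
  "modelA n ori = \<lparr> acarr = vcarr (BAs n), aadd = (\<lambda>c d b. c b + d b), azero = (\<lambda>b. 0),
     asmul = (\<lambda>s c b. s * c b), amul = mulA n ori, aone = (\<lambda>b. if b \<in> AV ` {1..n} then 1 else 0) \<rparr>"

lemma BAs_finite: "finite (BAs n)" by (simp add: BAs_def)

lemma ppA_inj: "inj_on (ppA ori) (BAs n)"
  by (auto simp: inj_on_def BAs_def ppA_def)

lemma ppA_path: "b \<in> BAs n \<Longrightarrow> is_path (lineQ n ori) (ppA ori b)"
  by (auto simp: BAs_def ppA_def lq_Cons)

lemma ppA_len: "length (snd (ppA ori b)) < 2"
  by (auto simp: ppA_def split: aidx.splits)

lemma kA_pth_in:
  assumes "b0 \<in> BAs n"
  shows "kA n ori (pth (ppA ori b0)) = (\<lambda>b. if b = b0 then (1::'k::field) else 0)"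
proof
  fix b
  show "kA n ori (pth (ppA ori b0)) b = (if b = b0 then (1::'k) else 0)"
    using assms ppA_inj[of ori n] unfolding kA_def pth_def inj_on_def by auto
qed

lemma kA_pth_out:
  assumes "p \<notin> ppA ori ` BAs n"
  shows "kA n ori (pth p) = (\<lambda>b. (0::'k::field))"
  using assms unfolding kA_def pth_def by (auto simp: fun_eq_iff)

lemma lq_path_cases:
  assumes "is_path (lineQ n ori) p" "p \<notin> ppA ori ` BAs n"
  shows "\<exists>v a b rest. p = (v, a # b # rest)"
proof -
  obtain v xs where p: "p = (v, xs)" by (cases p)
  show ?thesis
  proof (cases xs)
    case Nil
    then have "p = ppA ori (AV v)" "AV v \<in> BAs n" using assms p by (auto simp: ppA_def BAs_def)
    then show ?thesis using assms by blast
  next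
    case (Cons a as)
    show ?thesis
    proof (cases as)
      case Nil
      then have "p = ppA ori (AR a)" "AR a \<in> BAs n" using assms p Cons by (auto simp: ppA_def BAs_def lq_Cons)
      then show ?thesis using assms by blast
    next
      case (Cons b rest)
      then show ?thesis using p \<open>xs = a # as\<close> by blast
    qed
  qed
qed

lemma I_char:
  fixes I :: "(nat \<times> nat list \<Rightarrow> 'k::field) set"
  assumes g: "gentle (lineQ n ori) I" and r: "rad_sq_zero (quot_alg (path_alg (lineQ n ori)) I)"
    and z: "z \<in> acarr (path_alg (lineQ n ori))"
  shows "z \<in> I \<longleftrightarrow> kA n ori z = (\<lambda>b. 0)"
proof
  assume "z \<in> I"
  then have "\<forall>p. length (snd p) < 2 \<longrightarrow> z p = 0" using g unfolding gentle_def by blast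
  then have "z (ppA ori b) = 0" for b using ppA_len by blast
  then show "kA n ori z = (\<lambda>b. 0)" unfolding kA_def by (auto simp: fun_eq_iff)
next
  assume k0: "kA n ori z = (\<lambda>b. 0)"
  let ?R = "Rg (BAs n) (ppA ori) :: (aidx \<Rightarrow> 'k) \<Rightarrow> _"
  have J: "is_ideal (path_alg (lineQ n ori)) I" using g by (rule gentle_ideal)
  have "(\<lambda>q. z q - ?R (kA n ori z) q) \<in> I"
  proof (rule supp_induct_J[where \<kappa>="kA n ori" and R="?R", OF J _ _ _ _ _ z])
    show "\<forall>x\<in>acarr (path_alg (lineQ n ori)). \<forall>y\<in>acarr (path_alg (lineQ n ori)).
      kA n ori (\<lambda>p. x p + y p) = (\<lambda>b. kA n ori x b + kA n ori y b)" unfolding kA_def by (intro ballI ext) simp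
    show "\<forall>c. \<forall>x\<in>acarr (path_alg (lineQ n ori)). kA n ori (\<lambda>p. c * x p) = (\<lambda>b. c * kA n ori x b)"
      unfolding kA_def by (intro ballI allI ext) simp
    show "\<forall>c d. ?R (\<lambda>b. c b + d b) = (\<lambda>p. ?R c p + ?R d p)" by (simp add: Rg_add)
    show "\<forall>s c. ?R (\<lambda>b. s * c b) = (\<lambda>p. s * ?R c p)" by (simp add: Rg_smul)
    show "\<forall>p. is_path (lineQ n ori) p \<longrightarrow> (\<lambda>q. pth p q - ?R (kA n ori (pth p)) q) \<in> I"
    proof (intro allI impI)
      fix p assume pp: "is_path (lineQ n ori) p"
      show "(\<lambda>q. pth p q - ?R (kA n ori (pth p)) q) \<in> I"
      proof (cases "p \<in> ppA ori ` BAs n")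
        case True
        then obtain b0 where b0: "b0 \<in> BAs n" "p = ppA ori b0" by blast
        have "?R (kA n ori (pth p)) = pth p"
          unfolding b0(2) kA_pth_in[OF b0(1)] using Rg_unit[OF BAs_finite ppA_inj b0(1)] .
        then show ?thesis using ideal_pa_facts(2)[OF J] by simp
      next
        case False
        then obtain v a b rest where pv: "p = (v, a # b # rest)" using lq_path_cases pp by blast
        have pI: "pth p \<in> I" unfolding pv by (rule lq_len2_in_I[OF g r pp[unfolded pv]])
        show ?thesis unfolding kA_pth_out[OF False] Rg_zero using pI by simp
      qed
    qed
  qed
  then have "(\<lambda>q. z q - ?R (\<lambda>b. 0) q) \<in> I" using k0 by simp
  moreover have "?R (\<lambda>b. 0) = (\<lambda>p. 0)" by (rule Rg_zero)
  ultimately show "z \<in> I" by simp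
qed


lemma pa_ops_closed:
  assumes "finite (verts Q)"
  shows "ops_closed (path_alg Q :: ('k::field, _) kalg)"
  unfolding ops_closed_def
  apply (intro conjI ballI allI)
     apply (simp only: pa_simps(2), rule pa_add_closed; assumption)
    apply (simp only: pa_simps(4), rule pa_smul_closed; assumption)
   apply (rule pa_mul_closed; assumption)
  apply (simp only: pa_simps(5), rule pa_one_closed[OF assms])
  done

lemma kA_mul:
  assumes x: "x \<in> acarr (path_alg (lineQ n ori))" and y: "y \<in> acarr (path_alg (lineQ n ori))"
  shows "kA n ori (amul (path_alg (lineQ n ori)) x y) = mulA n ori (kA n ori x) (kA n ori y)"
proof
  fix b
  show "kA n ori (amul (path_alg (lineQ n ori)) x y) b = mulA n ori (kA n ori x) (kA n ori y) b"
  proof (cases "b \<in> BAs n")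
    case False then show ?thesis by (simp add: kA_def mulA_def)
  next
    case True
    then consider (v) i where "b = AV i" "i \<in> {1..n}" | (a) j where "b = AR j" "j \<in> {1..<n}"
      unfolding BAs_def by blast
    then show ?thesis
    proof cases
      case v
      have "is_path (lineQ n ori) (i, [])" using v by simp
      then show ?thesis using v True by (simp add: kA_def mulA_def ppA_def pa_mul_len0)
    next
      case a
      have p: "is_path (lineQ n ori) (if ori j then j else Suc j, [j])" using a by (simp add: lq_Cons)
      have "AV (if ori j then j else Suc j) \<in> BAs n" "AV (if ori j then Suc j else j) \<in> BAs n"
        using a by (auto simp: BAs_def)
      then show ?thesis using a True pa_mul_len1[OF p, of x y]
        by (simp add: kA_def mulA_def ppA_def)
    qed
  qed
qed

lemma modelA_simps:
  "acarr (modelA n ori) = vcarr (BAs n)" "aadd (modelA n ori) = (\<lambda>c d b. c b + d b)"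
  "azero (modelA n ori) = (\<lambda>b. 0)" "asmul (modelA n ori) = (\<lambda>s c b. s * c b)"
  "amul (modelA n ori) = mulA n ori" "aone (modelA n ori) = (\<lambda>b. if b \<in> AV ` {1..n} then 1 else 0)"
  by (simp_all add: modelA_def)

lemma quotA_iso:
  fixes I :: "(nat \<times> nat list \<Rightarrow> 'k::field) set"
  assumes g: "gentle (lineQ n ori) I" and r: "rad_sq_zero (quot_alg (path_alg (lineQ n ori)) I)"
  shows "alg_iso (quot_alg (path_alg (lineQ n ori)) I) (modelA n ori) (\<lambda>X. kA n ori (qrep X))
    \<and> ops_closed (quot_alg (path_alg (lineQ n ori)) I)"
proof (rule quot_iso[where \<kappa>="kA n ori" and J=I])
  let ?P = "path_alg (lineQ n ori) :: ('k, _) kalg"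
  show "ops_closed ?P" using pa_ops_closed lq_ok(2) by blast
  show "\<forall>x\<in>acarr ?P. kA n ori x \<in> acarr (modelA n ori)"
    unfolding modelA_simps vcarr_def kA_def by simp
  show "\<forall>m\<in>acarr (modelA n ori). \<exists>x\<in>acarr ?P. kA n ori x = m"
  proof
    fix m :: "aidx \<Rightarrow> 'k" assume m: "m \<in> acarr (modelA n ori)"
    let ?x = "Rg (BAs n) (ppA ori) m"
    have "?x \<in> acarr ?P"
      by (rule Rg_carr[OF BAs_finite]) (simp add: ppA_path)
    moreover have "kA n ori ?x = m"
    proof
      fix b show "kA n ori ?x b = m b"
      proof (cases "b \<in> BAs n")
        case True
        then show ?thesis using Rg_at[OF BAs_finite ppA_inj True] unfolding kA_def by simp
      next
        case False
        then show ?thesis using m unfolding modelA_simps vcarr_def kA_def by simp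
      qed
    qed
    ultimately show "\<exists>x\<in>acarr ?P. kA n ori x = m" by blast
  qed
  show "\<forall>x\<in>acarr ?P. \<forall>y\<in>acarr ?P. kA n ori (aadd ?P x y) = aadd (modelA n ori) (kA n ori x) (kA n ori y)"
    by (simp add: kA_def modelA_simps fun_eq_iff)
  show "\<forall>c. \<forall>x\<in>acarr ?P. kA n ori (asmul ?P c x) = asmul (modelA n ori) c (kA n ori x)"
    by (simp add: kA_def modelA_simps fun_eq_iff)
  show "\<forall>x\<in>acarr ?P. \<forall>y\<in>acarr ?P. kA n ori (amul ?P x y) = amul (modelA n ori) (kA n ori x) (kA n ori y)"
    using kA_mul unfolding modelA_simps by blast
  show "kA n ori (aone ?P) = aone (modelA n ori)"
    by (auto simp: kA_def modelA_simps fun_eq_iff BAs_def ppA_def)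
  show "\<forall>x\<in>acarr ?P. \<forall>y\<in>acarr ?P. (asub ?P y x \<in> I) = (kA n ori y = kA n ori x)"
  proof (intro ballI)
    fix x y assume x: "x \<in> acarr ?P" and y: "y \<in> acarr ?P"
    have d: "(\<lambda>p. y p - x p) \<in> acarr ?P" using pa_add_closed[OF y pa_smul_closed[OF x, of "-1"]] by simp
    have "kA n ori (\<lambda>p. y p - x p) = (\<lambda>b. kA n ori y b - kA n ori x b)" by (simp add: kA_def fun_eq_iff)
    then show "(asub ?P y x \<in> I) = (kA n ori y = kA n ori x)"
      using I_char[OF g r d] by (simp add: fun_eq_iff)
  qed
qed


lemma bq_simps[simp]:
  "verts (brauerQ n) = {1..n}"
  "arrs (brauerQ n) = (if n = 1 then {BL} else BA ` {1..<n} \<union> BB ` {1..<n})"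
  "src (brauerQ n) (BA i) = i" "src (brauerQ n) (BB i) = Suc i" "src (brauerQ n) BL = 1"
  "tgt (brauerQ n) (BA i) = Suc i" "tgt (brauerQ n) (BB i) = i" "tgt (brauerQ n) BL = 1"
  by (simp_all add: brauerQ_def)

lemma bq_ok: "tgt_ok (brauerQ n)" "finite (verts (brauerQ n))"
  by (auto simp: tgt_ok_def brauerQ_def split: barr.splits)

lemma bq_Cons: "is_path (brauerQ n) (v, a # as) \<longleftrightarrow>
   v \<in> {1..n} \<and> a \<in> arrs (brauerQ n) \<and> src (brauerQ n) a = v \<and> is_path (brauerQ n) (tgt (brauerQ n) a, as)"
  using is_path_Cons[of "brauerQ n" v a as] bq_ok(1) by (simp add: tgt_ok_def)

section \<open>Model of the Brauer line algebra\<close>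

datatype bidx = E nat | Al nat | Be nat | S nat

definition BBs :: "nat \<Rightarrow> bidx set" where
  "BBs n = E ` {1..n} \<union> Al ` {1..<n} \<union> Be ` {1..<n} \<union> S ` {1..n}"

definition ppB :: "nat \<Rightarrow> bidx \<Rightarrow> nat \<times> barr list" where
  "ppB n b = (case b of E i \<Rightarrow> (i, []) | Al i \<Rightarrow> (i, [BA i]) | Be i \<Rightarrow> (Suc i, [BB i])
     | S i \<Rightarrow> if n = 1 then (1, [BL]) else if i < n then (i, [BA i, BB i]) else (i, [BB (i - 1), BA (i - 1)]))"

definition pp2B :: "nat \<Rightarrow> bidx \<Rightarrow> nat \<times> barr list" where
  "pp2B n b = (case b of S i \<Rightarrow> if n = 1 then (0, []) else if i < n then (i, [BB (i - 1), BA (i - 1)]) else (i, [BA i, BB i])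
     | _ \<Rightarrow> (0, []))"

definition kB :: "nat \<Rightarrow> (nat \<times> barr list \<Rightarrow> 'k::field) \<Rightarrow> bidx \<Rightarrow> 'k" where
  "kB n x = (\<lambda>b. if b \<in> BBs n then x (ppB n b) + x (pp2B n b) else 0)"

definition mulB :: "nat \<Rightarrow> (bidx \<Rightarrow> 'k::field) \<Rightarrow> (bidx \<Rightarrow> 'k) \<Rightarrow> bidx \<Rightarrow> 'k" where
  "mulB n c d = (\<lambda>b. if b \<in> BBs n then (case b of E i \<Rightarrow> c (E i) * d (E i)
      | Al i \<Rightarrow> c (E i) * d (Al i) + c (Al i) * d (E (Suc i))
      | Be i \<Rightarrow> c (E (Suc i)) * d (Be i) + c (Be i) * d (E i)
      | S i \<Rightarrow> c (E i) * d (S i) + c (S i) * d (E i) + c (Al i) * d (Be i) + c (Be (i - 1)) * d (Al (i - 1)))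
     else 0)"

definition modelB :: "nat \<Rightarrow> ('k::field, bidx \<Rightarrow> 'k) kalg" where
  "modelB n = \<lparr> acarr = vcarr (BBs n), aadd = (\<lambda>c d b. c b + d b), azero = (\<lambda>b. 0),
     asmul = (\<lambda>s c b. s * c b), amul = mulB n, aone = (\<lambda>b. if b \<in> E ` {1..n} then 1 else 0) \<rparr>"

lemma modelB_simps:
  "acarr (modelB n) = vcarr (BBs n)" "aadd (modelB n) = (\<lambda>c d b. c b + d b)"
  "azero (modelB n) = (\<lambda>b. 0)" "asmul (modelB n) = (\<lambda>s c b. s * c b)"
  "amul (modelB n) = mulB n" "aone (modelB n) = (\<lambda>b. if b \<in> E ` {1..n} then 1 else 0)"
  by (simp_all add: modelB_def)

lemma BBs_finite: "finite (BBs n)" by (simp add: BBs_def)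

lemma BBs_mem[simp]:
  "E i \<in> BBs n \<longleftrightarrow> i \<in> {1..n}" "Al i \<in> BBs n \<longleftrightarrow> i \<in> {1..<n}"
  "Be i \<in> BBs n \<longleftrightarrow> i \<in> {1..<n}" "S i \<in> BBs n \<longleftrightarrow> i \<in> {1..n}"
  by (auto simp: BBs_def)

context
  fixes n :: nat and x :: "nat \<times> barr list \<Rightarrow> 'k::field"
  assumes x: "x \<in> acarr (path_alg (brauerQ n))"
begin

lemma xnp: "\<not> is_path (brauerQ n) p \<Longrightarrow> x p = 0"
  using pa_carrD[OF x] by blast

lemma kB_E: "kB n x (E i) = x (i, [])"
  using xnp[of "(0, [])"] xnp[of "(i, [])"] by (auto simp: kB_def ppB_def pp2B_def)

lemma kB_Al: "n \<noteq> 1 \<Longrightarrow> kB n x (Al i) = x (i, [BA i])"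
  using xnp[of "(0, [])"] xnp[of "(i, [BA i])"] by (auto simp: kB_def ppB_def pp2B_def bq_Cons)

lemma kB_Be: "n \<noteq> 1 \<Longrightarrow> kB n x (Be i) = x (Suc i, [BB i])"
  using xnp[of "(0, [])"] xnp[of "(Suc i, [BB i])"] by (auto simp: kB_def ppB_def pp2B_def bq_Cons)

lemma kB_Al1: "n = 1 \<Longrightarrow> kB n x (Al i) = 0"
  by (auto simp: kB_def)

lemma kB_Be1: "n = 1 \<Longrightarrow> kB n x (Be i) = 0"
  by (auto simp: kB_def)

lemma kB_S1: "n = 1 \<Longrightarrow> kB n x (S i) = x (i, [BL])"
  using xnp[of "(0, [])"] xnp[of "(i, [BL])"] by (auto simp: kB_def ppB_def pp2B_def bq_Cons)

lemma kB_S: "n \<noteq> 1 \<Longrightarrow> kB n x (S i) = x (i, [BA i, BB i]) + x (i, [BB (i - 1), BA (i - 1)])"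
proof -
  assume n: "n \<noteq> 1"
  show ?thesis
  proof (cases "S i \<in> BBs n")
    case True
    then show ?thesis using n by (auto simp: kB_def ppB_def pp2B_def)
  next
    case False
    then have "i = 0 \<or> i > n" by auto
    then have "\<not> is_path (brauerQ n) (i, [BA i, BB i])" "\<not> is_path (brauerQ n) (i, [BB (i - 1), BA (i - 1)])"
      by (auto simp: bq_Cons)
    then have "x (i, [BA i, BB i]) = 0" "x (i, [BB (i - 1), BA (i - 1)]) = 0" using xnp by blast+
    moreover have "kB n x (S i) = 0" using False unfolding kB_def by (simp only: if_False)
    ultimately show ?thesis by simp
  qed
qed

end


lemma pa_mul_len0':
  assumes "x \<in> acarr (path_alg Q)" "y \<in> acarr (path_alg Q)"
  shows "amul (path_alg Q) x y (v, []) = x (v, []) * y (v, [])"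
proof (cases "is_path Q (v, [])")
  case True then show ?thesis by (rule pa_mul_len0)
next
  case False then show ?thesis using pa_carrD[OF assms(1) False] by (simp add: pa_mul)
qed

lemma pa_mul_len1':
  assumes "x \<in> acarr (path_alg Q)" "y \<in> acarr (path_alg Q)"
  shows "amul (path_alg Q) x y (v, [a]) = x (v, []) * y (v, [a]) + x (v, [a]) * y (tgt Q a, [])"
proof (cases "is_path Q (v, [a])")
  case True then show ?thesis by (rule pa_mul_len1)
next
  case False then show ?thesis using pa_carrD[OF assms(1) False] pa_carrD[OF assms(2) False] by (simp add: pa_mul)
qed

lemma pa_mul_len2':
  assumes Q: "tgt_ok Q" and x: "x \<in> acarr (path_alg Q)" and y: "y \<in> acarr (path_alg Q)"
  shows "amul (path_alg Q) x y (v, [a, b]) =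
     x (v, []) * y (v, [a, b]) + x (v, [a]) * y (tgt Q a, [b]) + x (v, [a, b]) * y (tgt Q b, [])"
proof (cases "is_path Q (v, [a, b])")
  case True then show ?thesis by (rule pa_mul_len2)
next
  case False
  have Q': "\<forall>a\<in>arrs Q. tgt Q a \<in> verts Q" using Q by (simp add: tgt_ok_def)
  have "\<not> is_path Q (v, [a]) \<or> \<not> is_path Q (tgt Q a, [b])"
    using False by (auto simp: is_path_Cons[OF Q'])
  then have "x (v, [a]) * y (tgt Q a, [b]) = 0" using pa_carrD[OF x] pa_carrD[OF y] by auto
  then show ?thesis using False pa_carrD[OF x False] pa_carrD[OF y False] by (simp add: pa_mul)
qed

lemma kB_mul:
  assumes x: "x \<in> acarr (path_alg (brauerQ n))" and y: "y \<in> acarr (path_alg (brauerQ n))"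
  shows "kB n (amul (path_alg (brauerQ n)) x y) = mulB n (kB n x) (kB n y)"
proof
  fix b
  let ?M = "amul (path_alg (brauerQ n))"
  have xy: "?M x y \<in> acarr (path_alg (brauerQ n))" using pa_mul_closed[OF x y] .
  note m0 = pa_mul_len0'[OF x y] and m1 = pa_mul_len1'[OF x y] and m2 = pa_mul_len2'[OF bq_ok(1) x y]
  show "kB n (?M x y) b = mulB n (kB n x) (kB n y) b"
  proof (cases "b \<in> BBs n")
    case False then show ?thesis by (simp add: kB_def mulB_def)
  next
    case True
    show ?thesis
    proof (cases b)
      case (E i)
      then show ?thesis using True by (simp add: mulB_def kB_E[OF xy] kB_E[OF x] kB_E[OF y] m0)
    next
      case (Al i)
      then have n: "n \<noteq> 1" using True by auto
      show ?thesis using True Al n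
        by (simp add: mulB_def kB_E[OF x] kB_E[OF y] kB_Al[OF xy n] kB_Al[OF x n] kB_Al[OF y n] m1)
    next
      case (Be i)
      then have n: "n \<noteq> 1" using True by auto
      show ?thesis using True Be n
        by (simp add: mulB_def kB_E[OF x] kB_E[OF y] kB_Be[OF xy n] kB_Be[OF x n] kB_Be[OF y n] m1)
    next
      case (S i)
      then have i: "1 \<le> i" "i \<le> n" using True by auto
      show ?thesis
      proof (cases "n = 1")
        case True
        then have "i = 1" using i by simp
        then show ?thesis using S i
          by (simp add: mulB_def kB_E[OF x] kB_E[OF y] kB_S1[OF xy True] kB_S1[OF x True] kB_S1[OF y True]
               kB_Al1[OF x True] kB_Be1[OF x True] m1)
      next
        case False
        have si: "Suc (i - 1) = i" using i by simp
        show ?thesis using False S i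
          by (simp add: mulB_def kB_E[OF x] kB_E[OF y] kB_S[OF xy False] kB_S[OF x False] kB_S[OF y False]
               kB_Al[OF x False] kB_Be[OF x False] kB_Al[OF y False] kB_Be[OF y False] m2 si algebra_simps)
      qed
    qed
  qed
qed

lemma mulB_zero: "mulB n c (\<lambda>b. 0) = (\<lambda>b. 0)" "mulB n (\<lambda>b. 0) c = (\<lambda>b. 0)"
  by (auto simp: mulB_def fun_eq_iff split: bidx.splits)

definition WB :: "nat \<Rightarrow> (nat \<times> barr list \<Rightarrow> 'k::field) set" where
  "WB n = {z \<in> acarr (path_alg (brauerQ n)). kB n z = (\<lambda>b. 0)}"

lemma WB_ideal: "is_ideal (path_alg (brauerQ n)) (WB n :: (nat \<times> barr list \<Rightarrow> 'k::field) set)"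
  unfolding is_ideal_def
proof (intro conjI ballI allI)
  show "WB n \<subseteq> acarr (path_alg (brauerQ n))" by (auto simp: WB_def)
  show "azero (path_alg (brauerQ n)) \<in> WB n"
    using pa_zero_closed by (simp add: WB_def kB_def fun_eq_iff)
next
  fix x y :: "nat \<times> barr list \<Rightarrow> 'k" assume "x \<in> WB n" "y \<in> WB n"
  then have xy: "x \<in> acarr (path_alg (brauerQ n))" "kB n x = (\<lambda>b. 0)" "y \<in> acarr (path_alg (brauerQ n))" "kB n y = (\<lambda>b. 0)"
    by (auto simp: WB_def)
  have "kB n (\<lambda>p. x p + y p) = (\<lambda>b. kB n x b + kB n y b)" by (simp add: kB_def fun_eq_iff)
  then show "aadd (path_alg (brauerQ n)) x y \<in> WB n"
    using pa_add_closed[OF xy(1) xy(3)] xy(2,4) by (simp add: WB_def)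
next
  fix c and x :: "nat \<times> barr list \<Rightarrow> 'k" assume "x \<in> WB n"
  then have xy: "x \<in> acarr (path_alg (brauerQ n))" "kB n x = (\<lambda>b. 0)" by (auto simp: WB_def)
  have "kB n (\<lambda>p. c * x p) = (\<lambda>b. c * kB n x b)" by (simp add: kB_def fun_eq_iff distrib_left)
  then show "asmul (path_alg (brauerQ n)) c x \<in> WB n"
    using pa_smul_closed[OF xy(1)] xy(2) by (simp add: WB_def)
next
  fix a x :: "nat \<times> barr list \<Rightarrow> 'k" assume a: "a \<in> acarr (path_alg (brauerQ n))" and "x \<in> WB n"
  then have x: "x \<in> acarr (path_alg (brauerQ n))" "kB n x = (\<lambda>b. 0)" by (auto simp: WB_def)
  show "amul (path_alg (brauerQ n)) a x \<in> WB n"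
    unfolding WB_def using pa_mul_closed[OF a x(1)] kB_mul[OF a x(1)] x(2)
    by (simp add: mulB_zero)
next
  fix a x :: "nat \<times> barr list \<Rightarrow> 'k" assume a: "a \<in> acarr (path_alg (brauerQ n))" and "x \<in> WB n"
  then have x: "x \<in> acarr (path_alg (brauerQ n))" "kB n x = (\<lambda>b. 0)" by (auto simp: WB_def)
  show "amul (path_alg (brauerQ n)) x a \<in> WB n"
    unfolding WB_def using pa_mul_closed[OF x(1) a] kB_mul[OF x(1) a] x(2)
    by (simp add: mulB_zero)
qed


lemma rel_mems:
  "n = 1 \<Longrightarrow> pth (1, [BL, BL]) \<in> brauer_rels n"
  "n \<noteq> 1 \<Longrightarrow> i \<in> {1..n-2} \<Longrightarrow> pth (i, [BA i, BA (Suc i)]) \<in> brauer_rels n"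
  "n \<noteq> 1 \<Longrightarrow> i \<in> {1..n-2} \<Longrightarrow> pth (i + 2, [BB (Suc i), BB i]) \<in> brauer_rels n"
  "n \<noteq> 1 \<Longrightarrow> i \<in> {1..n-2} \<Longrightarrow> (\<lambda>p. pth (Suc i, [BB i, BA i]) p - pth (Suc i, [BA (Suc i), BB (Suc i)]) p) \<in> brauer_rels n"
  "n \<noteq> 1 \<Longrightarrow> pth (1, [BA 1, BB 1, BA 1]) \<in> brauer_rels n"
  "n \<noteq> 1 \<Longrightarrow> pth (n, [BB (n - 1), BA (n - 1), BB (n - 1)]) \<in> brauer_rels n"
  unfolding brauer_rels_def by auto

lemma pa_diff_closed:
  "f \<in> acarr (path_alg Q) \<Longrightarrow> g \<in> acarr (path_alg Q) \<Longrightarrow> (\<lambda>p. f p - g p) \<in> acarr (path_alg Q)"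
  using pa_add_closed[of f Q "\<lambda>p. (-1) * g p"] pa_smul_closed[of g Q "-1"] by simp

lemma kB_pth: "kB n (pth C) = (\<lambda>b. if b \<in> BBs n then (if ppB n b = C then 1 else 0) + (if pp2B n b = C then 1 else 0) else 0)"
  by (auto simp: kB_def pth_def fun_eq_iff)

lemma kB_diff: "kB n (\<lambda>p. f p - g p) = (\<lambda>b. kB n f b - kB n g b)"
  by (auto simp: kB_def fun_eq_iff)

lemma ppB_inj: "inj_on (ppB n) (BBs n)"
proof (rule inj_onI)
  fix b b0 assume "b \<in> BBs n" "b0 \<in> BBs n" "ppB n b = ppB n b0"
  then show "b = b0" by (cases b; cases b0) (auto simp: ppB_def split: if_splits)
qed

lemma pp2B_ne: "b \<in> BBs n \<Longrightarrow> b0 \<in> BBs n \<Longrightarrow> pp2B n b \<noteq> ppB n b0"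
  by (cases b; cases b0) (auto simp: ppB_def pp2B_def split: if_splits)

lemma pp2B_eq: "b \<in> BBs n \<Longrightarrow> 2 \<le> j \<Longrightarrow> j < n \<Longrightarrow> pp2B n b = pp2B n (S j) \<longleftrightarrow> b = S j"
  by (cases b) (auto simp: pp2B_def split: if_splits)

lemma ppB_path: "b \<in> BBs n \<Longrightarrow> is_path (brauerQ n) (ppB n b)"
  by (cases b) (auto simp: ppB_def bq_Cons)

lemma kB_pth_ppB: "b0 \<in> BBs n \<Longrightarrow> kB n (pth (ppB n b0)) = (\<lambda>b. if b = b0 then 1 else 0)"
  unfolding kB_pth using ppB_inj[of n] pp2B_ne[of _ n b0] by (auto simp: fun_eq_iff inj_on_def)

lemma kB_pth_pp2B: "2 \<le> j \<Longrightarrow> j < n \<Longrightarrow> kB n (pth (pp2B n (S j))) = (\<lambda>b. if b = S j then 1 else 0)"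
proof -
  assume j: "2 \<le> j" "j < n"
  have sj: "S j \<in> BBs n" using j by simp
  have ne: "\<forall>b\<in>BBs n. ppB n b \<noteq> pp2B n (S j)" using pp2B_ne[OF sj] by metis
  show ?thesis unfolding kB_pth using pp2B_eq[OF _ j] ne sj by (auto simp: fun_eq_iff)
qed

lemma kB_pth_out: "p \<notin> ppB n ` BBs n \<Longrightarrow> p \<notin> pp2B n ` BBs n \<Longrightarrow> kB n (pth p) = (\<lambda>b. 0)"
  unfolding kB_pth by (auto simp: fun_eq_iff)


lemma rels_WB:
  fixes r :: "nat \<times> barr list \<Rightarrow> 'k::field"
  assumes n: "1 \<le> n" and r: "r \<in> brauer_rels n"
  shows "r \<in> WB n"
proof (cases "n = 1")
  case True
  then have r: "r = pth (1, [BL, BL])" using r by (simp add: brauer_rels_def)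
  have "is_path (brauerQ n) (1, [BL, BL])" using True by (simp add: bq_Cons)
  moreover have "(1, [BL, BL]) \<notin> ppB n ` BBs n" "(1, [BL, BL]) \<notin> pp2B n ` BBs n"
    using True by (auto simp: BBs_def ppB_def pp2B_def)
  ultimately show ?thesis unfolding r WB_def using pth_closed kB_pth_out by blast
next
  case False
  then have n2: "2 \<le> n" using n by simp
  have outI: "is_path (brauerQ n) C \<Longrightarrow> C \<notin> ppB n ` BBs n \<Longrightarrow> C \<notin> pp2B n ` BBs n \<Longrightarrow> pth C \<in> WB n" for C
    unfolding WB_def using pth_closed kB_pth_out by blast
  from r False consider
      (A) i where "i \<in> {1..n-2}" "r = pth (i, [BA i, BA (Suc i)])"
    | (B) i where "i \<in> {1..n-2}" "r = pth (i + 2, [BB (Suc i), BB i])"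
    | (C) i where "i \<in> {1..n-2}" "r = (\<lambda>p. pth (Suc i, [BB i, BA i]) p - pth (Suc i, [BA (Suc i), BB (Suc i)]) p)"
    | (L) "r = pth (1, [BA 1, BB 1, BA 1])"
    | (R) "r = pth (n, [BB (n - 1), BA (n - 1), BB (n - 1)])"
    unfolding brauer_rels_def by auto
  then show ?thesis
  proof cases
    case (A i)
    show ?thesis unfolding A(2)
      by (rule outI) (use A(1) False n2 in \<open>auto simp: bq_Cons BBs_def ppB_def pp2B_def split: if_splits\<close>)
  next
    case (B i)
    show ?thesis unfolding B(2)
      by (rule outI) (use B(1) False n2 in \<open>auto simp: bq_Cons BBs_def ppB_def pp2B_def split: if_splits\<close>)
  next
    case (L)
    show ?thesis unfolding L
      by (rule outI) (use False n2 in \<open>auto simp: bq_Cons BBs_def ppB_def pp2B_def split: if_splits\<close>)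
  next
    case (R)
    show ?thesis unfolding R
      by (rule outI) (use False n2 in \<open>auto simp: bq_Cons BBs_def ppB_def pp2B_def split: if_splits\<close>)
  next
    case (C i)
    have e1: "pp2B n (S (Suc i)) = (Suc i, [BB i, BA i])" using C(1) False n2 by (auto simp: pp2B_def)
    have e2: "ppB n (S (Suc i)) = (Suc i, [BA (Suc i), BB (Suc i)])" using C(1) False n2 by (auto simp: ppB_def)
    have sb: "S (Suc i) \<in> BBs n" using C(1) n2 by auto
    have k1: "kB n (pth (Suc i, [BB i, BA i])) = (\<lambda>b. if b = S (Suc i) then (1::'k) else 0)"
    proof -
      have si: "2 \<le> Suc i" "Suc i < n" using C(1) n2 by auto
      show ?thesis using kB_pth_pp2B[OF si] unfolding e1 .
    qed
    have k2: "kB n (pth (Suc i, [BA (Suc i), BB (Suc i)])) = (\<lambda>b. if b = S (Suc i) then (1::'k) else 0)"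
      using kB_pth_ppB[OF sb] unfolding e2 .
    have p1: "is_path (brauerQ n) (Suc i, [BB i, BA i])" using C(1) False n2 by (auto simp: bq_Cons)
    have p2: "is_path (brauerQ n) (Suc i, [BA (Suc i), BB (Suc i)])" using C(1) False n2 by (auto simp: bq_Cons)
    have kd: "kB n (\<lambda>p. (pth (Suc i, [BB i, BA i]) p :: 'k) - pth (Suc i, [BA (Suc i), BB (Suc i)]) p)
        = (\<lambda>b. kB n (pth (Suc i, [BB i, BA i])) b - kB n (pth (Suc i, [BA (Suc i), BB (Suc i)])) b)"
      by (rule kB_diff)
    show ?thesis unfolding C(2) WB_def mem_Collect_eq
    proof (rule conjI)
      show "(\<lambda>p. (pth (Suc i, [BB i, BA i]) p :: 'k) - pth (Suc i, [BA (Suc i), BB (Suc i)]) p) \<in> acarr (path_alg (brauerQ n))"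
        using pa_diff_closed[OF pth_closed[OF p1] pth_closed[OF p2]] .
      show "kB n (\<lambda>p. (pth (Suc i, [BB i, BA i]) p :: 'k) - pth (Suc i, [BA (Suc i), BB (Suc i)]) p) = (\<lambda>b. 0)"
        unfolding kd k1 k2 by simp
    qed
  qed
qed

definition JB :: "nat \<Rightarrow> (nat \<times> barr list \<Rightarrow> 'k::field) set" where
  "JB n = gen_ideal (path_alg (brauerQ n)) (brauer_rels n)"

lemma JB_props:
  assumes "1 \<le> n"
  shows "is_ideal (path_alg (brauerQ n)) (JB n :: (_ \<Rightarrow> 'k::field) set)"
    "brauer_rels n \<subseteq> (JB n :: (_ \<Rightarrow> 'k::field) set)"
    "(JB n :: (_ \<Rightarrow> 'k::field) set) \<subseteq> WB n"
proof -
  have sub: "brauer_rels n \<subseteq> (WB n :: (_ \<Rightarrow> 'k) set)" using rels_WB assms by blast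
  then have "brauer_rels n \<subseteq> acarr (path_alg (brauerQ n) :: ('k, _) kalg)" by (auto simp: WB_def)
  note s = this
  show "is_ideal (path_alg (brauerQ n)) (JB n :: (_ \<Rightarrow> 'k::field) set)"
    unfolding JB_def by (rule gen_ideal_props(1)[OF pa_ideal_carr s])
  show "brauer_rels n \<subseteq> (JB n :: (_ \<Rightarrow> 'k::field) set)"
    unfolding JB_def by (rule gen_ideal_props(2)[OF pa_ideal_carr s])
  show "(JB n :: (_ \<Rightarrow> 'k::field) set) \<subseteq> WB n"
    unfolding JB_def using gen_ideal_least[OF WB_ideal sub] .
qed


lemma pa_mul_diff_left:
  "amul (path_alg Q) (\<lambda>p. f p - g p) h = (\<lambda>p. amul (path_alg Q) f h p - amul (path_alg Q) g h p)"
  by (rule ext) (simp add: pa_mul sum_subtractf[symmetric] left_diff_distrib)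

lemma is_path_fst: "is_path Q (v, xs) \<Longrightarrow> v \<in> verts Q"
  by (simp add: is_path_def)

definition cyc :: "barr \<Rightarrow> barr \<Rightarrow> bool" where
  "cyc a b \<longleftrightarrow> (\<exists>i. a = BA i \<and> b = BB i) \<or> (\<exists>i. a = BB i \<and> b = BA i)"

context
  fixes n :: nat
  assumes n1: "1 \<le> n"
begin

abbreviation "PB \<equiv> path_alg (brauerQ n)"

lemma J_ideal: "is_ideal PB (JB n :: (_ \<Rightarrow> 'k::field) set)" using JB_props(1)[OF n1] .

lemma J_rel: "r \<in> brauer_rels n \<Longrightarrow> (r :: _ \<Rightarrow> 'k::field) \<in> JB n" using JB_props(2)[OF n1] by blast

lemma J_right:
  assumes "is_path (brauerQ n) (v, xs)" "is_path (brauerQ n) (pend (brauerQ n) (v, xs), ys)"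
    "(pth (v, xs) :: _ \<Rightarrow> 'k::field) \<in> JB n"
  shows "(pth (v, xs @ ys) :: _ \<Rightarrow> 'k) \<in> JB n"
proof -
  have "amul PB (pth (v, xs)) (pth (pend (brauerQ n) (v, xs), ys)) \<in> (JB n :: (_ \<Rightarrow> 'k) set)"
    by (rule ideal_pa_facts(6)[OF J_ideal pth_closed[OF assms(2)] assms(3)])
  moreover have "amul PB (pth (v, xs)) (pth (pend (brauerQ n) (v, xs), ys)) = (pth (v, xs @ ys) :: _ \<Rightarrow> 'k)"
    using pth_mult[OF bq_ok(1) assms(1) assms(2)] by simp
  ultimately show ?thesis by simp
qed

lemma J_left:
  assumes "is_path (brauerQ n) (v, xs)" "is_path (brauerQ n) (pend (brauerQ n) (v, xs), ys)"
    "(pth (pend (brauerQ n) (v, xs), ys) :: _ \<Rightarrow> 'k::field) \<in> JB n"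
  shows "(pth (v, xs @ ys) :: _ \<Rightarrow> 'k) \<in> JB n"
proof -
  have "amul PB (pth (v, xs)) (pth (pend (brauerQ n) (v, xs), ys)) \<in> (JB n :: (_ \<Rightarrow> 'k) set)"
    by (rule ideal_pa_facts(5)[OF J_ideal pth_closed[OF assms(1)] assms(3)])
  moreover have "amul PB (pth (v, xs)) (pth (pend (brauerQ n) (v, xs), ys)) = (pth (v, xs @ ys) :: _ \<Rightarrow> 'k)"
    using pth_mult[OF bq_ok(1) assms(1) assms(2)] by simp
  ultimately show ?thesis by simp
qed


lemma len2_noncyc:
  assumes n: "n \<noteq> 1" and p: "is_path (brauerQ n) (v, [a, b])" and nc: "\<not> cyc a b"
  shows "(pth (v, [a, b]) :: _ \<Rightarrow> 'k::field) \<in> JB n"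
proof -
  have ab: "a \<in> arrs (brauerQ n)" "b \<in> arrs (brauerQ n)" "src (brauerQ n) a = v" "tgt (brauerQ n) a = src (brauerQ n) b"
    using p by (auto simp: bq_Cons)
  show ?thesis
  proof (cases a)
    case (BA i)
    then show ?thesis
    proof (cases b)
      case (BA j)
      then have "j = Suc i" "v = i" "i \<in> {1..n-2}" using ab \<open>a = BA i\<close> n by auto
      then show ?thesis using J_rel[OF rel_mems(2)[OF n]] BA \<open>a = BA i\<close> by simp
    next
      case (BB j)
      then have "j = i" using ab \<open>a = BA i\<close> n by auto
      then show ?thesis using nc BB \<open>a = BA i\<close> by (auto simp: cyc_def)
    next
      case BL then show ?thesis using ab n by auto
    qed
  next
    case (BB i)
    then show ?thesis
    proof (cases b)
      case (BB j)
      then have "i = Suc j" "v = j + 2" "j \<in> {1..n-2}" using ab \<open>a = BB i\<close> n by auto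
      then show ?thesis using J_rel[OF rel_mems(3)[OF n]] BB \<open>a = BB i\<close> by simp
    next
      case (BA j)
      then have "j = i" using ab \<open>a = BB i\<close> n by auto
      then show ?thesis using nc BA \<open>a = BB i\<close> by (auto simp: cyc_def)
    next
      case BL then show ?thesis using ab n by auto
    qed
  next
    case BL then show ?thesis using ab n by auto
  qed
qed

lemma len3:
  assumes p: "is_path (brauerQ n) (v, [a, b, c])"
  shows "(pth (v, [a, b, c]) :: _ \<Rightarrow> 'k::field) \<in> JB n"
proof -
  have pp: "v \<in> {1..n}" "a \<in> arrs (brauerQ n)" "src (brauerQ n) a = v"
     "b \<in> arrs (brauerQ n)" "src (brauerQ n) b = tgt (brauerQ n) a"
     "c \<in> arrs (brauerQ n)" "src (brauerQ n) c = tgt (brauerQ n) b"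
     "tgt (brauerQ n) c \<in> {1..n}"
    using p by (auto simp: bq_Cons)
  have p2: "is_path (brauerQ n) (v, [a, b])" "is_path (brauerQ n) (v, [a])"
      "is_path (brauerQ n) (tgt (brauerQ n) a, [b, c])" "is_path (brauerQ n) (tgt (brauerQ n) b, [c])"
    using p by (auto simp: bq_Cons)
  have viaL: "(pth (v, [a, b]) :: _ \<Rightarrow> 'k) \<in> JB n \<Longrightarrow> (pth (v, [a, b, c]) :: _ \<Rightarrow> 'k) \<in> JB n"
    using J_right[OF p2(1), of "[c]"] p2(4) by simp
  have viaR: "(pth (tgt (brauerQ n) a, [b, c]) :: _ \<Rightarrow> 'k) \<in> JB n \<Longrightarrow> (pth (v, [a, b, c]) :: _ \<Rightarrow> 'k) \<in> JB n"
    using J_left[OF p2(2), of "[b, c]"] p2(3) by simp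
  show ?thesis
  proof (cases "n = 1")
    case True
    then have "a = BL" "b = BL" "v = 1" using pp by auto
    then show ?thesis using viaL J_rel[OF rel_mems(1)[OF True]] by simp
  next
    case n: False
    show ?thesis
    proof (cases "cyc a b")
      case False then show ?thesis using viaL len2_noncyc[OF n p2(1)] by blast
    next
      case cab: True
      show ?thesis
      proof (cases "cyc b c")
        case False then show ?thesis using viaR len2_noncyc[OF n p2(3)] by blast
      next
        case cbc: True
        have n2: "2 \<le> n" using n n1 by simp
        from cab cbc consider (aba) i where "a = BA i" "b = BB i" "c = BA i" | (bab) i where "a = BB i" "b = BA i" "c = BB i"
          unfolding cyc_def by auto
        then show ?thesis
        proof cases
          case aba
          then have vi: "v = i" "i \<in> {1..<n}" using pp n by auto
          show ?thesis
          proof (cases "i = 1")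
            case True then show ?thesis using J_rel[OF rel_mems(5)[OF n]] aba vi by simp
          next
            case False
            define k where "k = i - 1"
            have k: "k \<in> {1..n-2}" "Suc k = i" using False vi unfolding k_def by auto
            have r: "(\<lambda>p. pth (i, [BB k, BA k]) p - pth (i, [BA i, BB i]) p :: 'k) \<in> JB n"
              using J_rel[OF rel_mems(4)[OF n k(1)]] k(2) by simp
            have q1: "is_path (brauerQ n) (i, [BB k, BA k])" "is_path (brauerQ n) (i, [BA i, BB i])"
                "is_path (brauerQ n) (i, [BA i])" using k n2 by (auto simp: bq_Cons)
            have m: "amul PB (\<lambda>p. pth (i, [BB k, BA k]) p - pth (i, [BA i, BB i]) p :: 'k) (pth (i, [BA i]))
               = (\<lambda>p. pth (i, [BB k, BA k, BA i]) p - pth (i, [BA i, BB i, BA i]) p)"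
              unfolding pa_mul_diff_left
              using pth_mult[where 'k='k, OF bq_ok(1) q1(1) q1(3)] pth_mult[where 'k='k, OF bq_ok(1) q1(2) q1(3)] k by simp
            have mJ: "(\<lambda>p. pth (i, [BB k, BA k, BA i]) p - pth (i, [BA i, BB i, BA i]) p :: 'k) \<in> JB n"
              using ideal_pa_facts(6)[OF J_ideal pth_closed[OF q1(3)] r] unfolding m .
            have q2: "is_path (brauerQ n) (i, [BB k])" "is_path (brauerQ n) (k, [BA k, BA i])"
              using k n2 by (auto simp: bq_Cons)
            have xJ: "(pth (i, [BB k, BA k, BA i]) :: _ \<Rightarrow> 'k) \<in> JB n"
              using J_left[OF q2(1), of "[BA k, BA i]"] q2(2) J_rel[OF rel_mems(2)[OF n k(1)]] k by simp
            have "(\<lambda>p. pth (i, [BB k, BA k, BA i]) p - (pth (i, [BB k, BA k, BA i]) p - pth (i, [BA i, BB i, BA i]) p) :: 'k) \<in> JB n"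
              using ideal_pa_diff[OF J_ideal xJ mJ] .
            then show ?thesis using aba vi by simp
          qed
        next
          case bab
          then have vi: "v = Suc i" "i \<in> {1..<n}" using pp n by auto
          show ?thesis
          proof (cases "Suc i = n")
            case True
            then have "i = n - 1" by simp
            then show ?thesis using J_rel[OF rel_mems(6)[OF n]] bab vi True by simp
          next
            case False
            have k: "i \<in> {1..n-2}" using False vi by auto
            have r: "(\<lambda>p. pth (Suc i, [BB i, BA i]) p - pth (Suc i, [BA (Suc i), BB (Suc i)]) p :: 'k) \<in> JB n"
              using J_rel[OF rel_mems(4)[OF n k]] by simp
            have q1: "is_path (brauerQ n) (Suc i, [BB i, BA i])" "is_path (brauerQ n) (Suc i, [BA (Suc i), BB (Suc i)])"
                "is_path (brauerQ n) (Suc i, [BB i])" using k n2 by (auto simp: bq_Cons)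
            have m: "amul PB (\<lambda>p. pth (Suc i, [BB i, BA i]) p - pth (Suc i, [BA (Suc i), BB (Suc i)]) p :: 'k) (pth (Suc i, [BB i]))
               = (\<lambda>p. pth (Suc i, [BB i, BA i, BB i]) p - pth (Suc i, [BA (Suc i), BB (Suc i), BB i]) p)"
              unfolding pa_mul_diff_left
              using pth_mult[where 'k='k, OF bq_ok(1) q1(1) q1(3)] pth_mult[where 'k='k, OF bq_ok(1) q1(2) q1(3)] by simp
            have mJ: "(\<lambda>p. pth (Suc i, [BB i, BA i, BB i]) p - pth (Suc i, [BA (Suc i), BB (Suc i), BB i]) p :: 'k) \<in> JB n"
              using ideal_pa_facts(6)[OF J_ideal pth_closed[OF q1(3)] r] unfolding m .
            have q2: "is_path (brauerQ n) (Suc i, [BA (Suc i)])" "is_path (brauerQ n) (i + 2, [BB (Suc i), BB i])"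
              using k n2 by (auto simp: bq_Cons)
            have yJ: "(pth (Suc i, [BA (Suc i), BB (Suc i), BB i]) :: _ \<Rightarrow> 'k) \<in> JB n"
              using J_left[OF q2(1), of "[BB (Suc i), BB i]"] q2(2) J_rel[OF rel_mems(3)[OF n k]] by simp
            have "(\<lambda>p. (pth (Suc i, [BB i, BA i, BB i]) p - pth (Suc i, [BA (Suc i), BB (Suc i), BB i]) p)
                    + pth (Suc i, [BA (Suc i), BB (Suc i), BB i]) p :: 'k) \<in> JB n"
              using ideal_pa_facts(3)[OF J_ideal mJ yJ] .
            then show ?thesis using bab vi by simp
          qed
        qed
      qed
    qed
  qed
qed

lemma len3plus:
  assumes p: "is_path (brauerQ n) (v, a # b # c # rest)"
  shows "(pth (v, a # b # c # rest) :: _ \<Rightarrow> 'k::field) \<in> JB n"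
proof -
  have pr: "is_path (brauerQ n) (pend (brauerQ n) (v, [a, b, c]), rest)"
    using p by (auto simp: bq_Cons)
  then have "tgt (brauerQ n) c \<in> {1..n}" using is_path_fst by fastforce
  then have p3: "is_path (brauerQ n) (v, [a, b, c])" using p by (auto simp: bq_Cons)
  show ?thesis using J_right[OF p3 pr len3[OF p3]] by simp
qed

end


context
  fixes n :: nat
  assumes n1: "1 \<le> n"
begin

lemma pp2B_path:
  assumes b: "b \<in> BBs n" and p: "is_path (brauerQ n) (pp2B n b)"
  shows "\<exists>j. 2 \<le> j \<and> j < n \<and> pp2B n b = pp2B n (S j)"
proof (cases b)
  case (S i)
  show ?thesis
  proof (cases "n = 1")
    case True then show ?thesis using p S by (simp add: pp2B_def)
  next
    case False
    show ?thesis
    proof (cases "i < n")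
      case True
      then have "is_path (brauerQ n) (i, [BB (i - 1), BA (i - 1)])" using p S False by (simp add: pp2B_def)
      then have "2 \<le> i" using False by (auto simp: bq_Cons)
      then show ?thesis using True S by blast
    next
      case nl: False
      then have "is_path (brauerQ n) (i, [BA i, BB i])" using p S False by (simp add: pp2B_def)
      then show ?thesis using nl False by (auto simp: bq_Cons)
    qed
  qed
qed (use p in \<open>auto simp: pp2B_def\<close>)

lemma path_pth_J:
  assumes p: "is_path (brauerQ n) p" and o1: "p \<notin> ppB n ` BBs n" and o2: "p \<notin> pp2B n ` BBs n"
  shows "(pth p :: _ \<Rightarrow> 'k::field) \<in> JB n"
proof -
  obtain v xs where pv: "p = (v, xs)" by (cases p)
  show ?thesis
  proof (cases xs)
    case Nil
    then have "p = ppB n (E v)" "E v \<in> BBs n" using p pv by (auto simp: ppB_def)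
    then show ?thesis using o1 by blast
  next
    case (Cons a as)
    note xs = Cons
    show ?thesis
    proof (cases as)
      case Nil
      have pa: "v \<in> {1..n}" "a \<in> arrs (brauerQ n)" "src (brauerQ n) a = v" using p pv xs Nil by (auto simp: bq_Cons)
      show ?thesis
      proof (cases "n = 1")
        case True
        then have "p = ppB n (S 1)" "S 1 \<in> BBs n" using pa pv xs Nil by (auto simp: ppB_def)
        then show ?thesis using o1 by blast
      next
        case False
        then consider (A) i where "a = BA i" "i \<in> {1..<n}" | (B) i where "a = BB i" "i \<in> {1..<n}"
          using pa by auto
        then show ?thesis
        proof cases
          case A
          then have "p = ppB n (Al i)" "Al i \<in> BBs n" using pa pv xs Nil by (auto simp: ppB_def)
          then show ?thesis using o1 by blast
        next
          case B
          then have "p = ppB n (Be i)" "Be i \<in> BBs n" using pa pv xs Nil by (auto simp: ppB_def)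
          then show ?thesis using o1 by blast
        qed
      qed
    next
      case (Cons b bs)
      note as = Cons
      show ?thesis
      proof (cases bs)
        case Nil
        have pab: "is_path (brauerQ n) (v, [a, b])" using p pv xs as Nil by simp
        have pa: "v \<in> {1..n}" "a \<in> arrs (brauerQ n)" "src (brauerQ n) a = v" "b \<in> arrs (brauerQ n)"
            "src (brauerQ n) b = tgt (brauerQ n) a" using pab by (auto simp: bq_Cons)
        show ?thesis
        proof (cases "n = 1")
          case True
          then have "a = BL" "b = BL" "v = 1" using pa by auto
          then show ?thesis using J_rel[OF n1 rel_mems(1)[OF True]] pv xs as Nil by simp
        next
          case n: False
          show ?thesis
          proof (cases "cyc a b")
            case False then show ?thesis using len2_noncyc[OF n1 n pab] pv xs as Nil by simp
          next
            case True
            then consider (ab) i where "a = BA i" "b = BB i" | (ba) i where "a = BB i" "b = BA i"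
              by (auto simp: cyc_def)
            then show ?thesis
            proof cases
              case ab
              then have "p = ppB n (S i)" "S i \<in> BBs n" using pa pv xs as Nil n by (auto simp: ppB_def)
              then show ?thesis using o1 by blast
            next
              case ba
              then have vi: "v = Suc i" "i \<in> {1..<n}" using pa n by auto
              show ?thesis
              proof (cases "Suc i = n")
                case True
                then have "p = ppB n (S n)" "S n \<in> BBs n" using vi ba pv xs as Nil n n1 by (auto simp: ppB_def)
                then show ?thesis using o1 by blast
              next
                case False
                then have "p = pp2B n (S (Suc i))" "S (Suc i) \<in> BBs n" using vi ba pv xs as Nil n by (auto simp: pp2B_def)
                then show ?thesis using o2 by blast
              qed
            qed
          qed
        qed
      next
        case (Cons c cs)
        then show ?thesis using len3plus[OF n1] p pv xs as by simp
      qed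
    qed
  qed
qed

lemma WB_sub_JB:
  assumes z: "z \<in> acarr (path_alg (brauerQ n))" and k: "kB n z = (\<lambda>b. 0)"
  shows "(z :: _ \<Rightarrow> 'k::field) \<in> JB n"
proof -
  let ?R = "Rg (BBs n) (ppB n) :: (bidx \<Rightarrow> 'k) \<Rightarrow> _"
  have "(\<lambda>q. z q - ?R (kB n z) q) \<in> JB n"
  proof (rule supp_induct_J[where \<kappa>="kB n" and R="?R", OF J_ideal[OF n1] _ _ _ _ _ z])
    show "\<forall>x\<in>acarr (path_alg (brauerQ n)). \<forall>y\<in>acarr (path_alg (brauerQ n)).
      kB n (\<lambda>p. x p + y p) = (\<lambda>b. kB n x b + kB n y b)" unfolding kB_def by (intro ballI ext) simp
    show "\<forall>c. \<forall>x\<in>acarr (path_alg (brauerQ n)). kB n (\<lambda>p. c * x p) = (\<lambda>b. c * kB n x b)"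
      unfolding kB_def by (intro ballI allI ext) (simp add: distrib_left)
    show "\<forall>c d. ?R (\<lambda>b. c b + d b) = (\<lambda>p. ?R c p + ?R d p)" by (simp add: Rg_add)
    show "\<forall>s c. ?R (\<lambda>b. s * c b) = (\<lambda>p. s * ?R c p)" by (simp add: Rg_smul)
    show "\<forall>p. is_path (brauerQ n) p \<longrightarrow> (\<lambda>q. pth p q - ?R (kB n (pth p)) q) \<in> JB n"
    proof (intro allI impI)
      fix p assume pp: "is_path (brauerQ n) p"
      show "(\<lambda>q. pth p q - ?R (kB n (pth p)) q) \<in> JB n"
      proof (cases "p \<in> ppB n ` BBs n")
        case True
        then obtain b0 where b0: "b0 \<in> BBs n" "p = ppB n b0" by blast
        have "?R (kB n (pth p)) = pth p"
          unfolding b0(2) kB_pth_ppB[OF b0(1)] using Rg_unit[OF BBs_finite ppB_inj b0(1)] .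
        then show ?thesis using ideal_pa_facts(2)[OF J_ideal[OF n1]] by simp
      next
        case o1: False
        show ?thesis
        proof (cases "p \<in> pp2B n ` BBs n")
          case True
          then obtain b where b: "b \<in> BBs n" "p = pp2B n b" by blast
          then obtain j where j: "2 \<le> j" "j < n" "p = pp2B n (S j)" using pp2B_path[OF b(1)] pp by auto
          have sj: "S j \<in> BBs n" using j by simp
          have "?R (kB n (pth p)) = pth (ppB n (S j))"
            unfolding j(3) kB_pth_pp2B[OF j(1,2)] using Rg_unit[OF BBs_finite ppB_inj sj] .
          moreover have "ppB n (S j) = (Suc (j - 1), [BA (Suc (j - 1)), BB (Suc (j - 1))])"
            "p = (Suc (j - 1), [BB (j - 1), BA (j - 1)])" using j by (auto simp: ppB_def pp2B_def)
          moreover have "j - 1 \<in> {1..n-2}" "n \<noteq> 1" using j by auto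
          ultimately show ?thesis using J_rel[OF n1 rel_mems(4)] by simp
        next
          case o2: False
          have pI: "pth p \<in> JB n" using path_pth_J[OF pp o1 o2] .
          show ?thesis unfolding kB_pth_out[OF o1 o2] Rg_zero using pI by simp
        qed
      qed
    qed
  qed
  then have "(\<lambda>q. z q - ?R (\<lambda>b. 0) q) \<in> JB n" using k by simp
  moreover have "?R (\<lambda>b. 0) = (\<lambda>p. 0)" by (rule Rg_zero)
  ultimately show ?thesis by simp
qed

end


lemma brauer_iso:
  assumes n1: "1 \<le> n"
  shows "alg_iso (brauer_line n :: ('k::field, _) kalg) (modelB n) (\<lambda>X. kB n (qrep X)) \<and> ops_closed (brauer_line n :: ('k::field, _) kalg)"
proof -
  let ?P = "path_alg (brauerQ n) :: ('k, _) kalg"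
  have bl: "(brauer_line n :: ('k, _) kalg) = quot_alg ?P (JB n)" by (simp add: brauer_line_def JB_def)
  have "alg_iso (quot_alg ?P (JB n)) (modelB n) (\<lambda>X. kB n (qrep X)) \<and> ops_closed (quot_alg ?P (JB n))"
  proof (rule quot_iso[where \<kappa>="kB n" and J="JB n"])
    show "ops_closed ?P" using pa_ops_closed bq_ok(2) by blast
    show "\<forall>x\<in>acarr ?P. kB n x \<in> acarr (modelB n)"
      unfolding modelB_simps vcarr_def kB_def by simp
    show "\<forall>m\<in>acarr (modelB n). \<exists>x\<in>acarr ?P. kB n x = m"
    proof
      fix m :: "bidx \<Rightarrow> 'k" assume m: "m \<in> acarr (modelB n)"
      let ?x = "Rg (BBs n) (ppB n) m"
      have "?x \<in> acarr ?P" by (rule Rg_carr[OF BBs_finite]) (simp add: ppB_path)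
      moreover have "kB n ?x = m"
      proof
        fix b show "kB n ?x b = m b"
        proof (cases "b \<in> BBs n")
          case True
          have "pp2B n b \<notin> ppB n ` BBs n" using pp2B_ne[OF True] by (metis imageE)
          then have r2: "?x (pp2B n b) = 0" by (rule Rg_out)
          have r1: "?x (ppB n b) = m b" by (rule Rg_at[OF BBs_finite ppB_inj True])
          show ?thesis unfolding kB_def using r1 r2 True by simp
        next
          case False
          then show ?thesis using m unfolding modelB_simps vcarr_def kB_def by simp
        qed
      qed
      ultimately show "\<exists>x\<in>acarr ?P. kB n x = m" by blast
    qed
    show "\<forall>x\<in>acarr ?P. \<forall>y\<in>acarr ?P. kB n (aadd ?P x y) = aadd (modelB n) (kB n x) (kB n y)"
      by (simp add: kB_def modelB_simps fun_eq_iff)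
    show "\<forall>c. \<forall>x\<in>acarr ?P. kB n (asmul ?P c x) = asmul (modelB n) c (kB n x)"
      by (simp add: kB_def modelB_simps fun_eq_iff distrib_left)
    show "\<forall>x\<in>acarr ?P. \<forall>y\<in>acarr ?P. kB n (amul ?P x y) = amul (modelB n) (kB n x) (kB n y)"
      using kB_mul unfolding modelB_simps by blast
    show "kB n (aone ?P) = aone (modelB n)"
    proof
      fix b
      show "kB n (aone ?P) b = aone (modelB n) b"
        by (cases b) (auto simp: kB_def modelB_simps ppB_def pp2B_def)
    qed
    show "\<forall>x\<in>acarr ?P. \<forall>y\<in>acarr ?P. (asub ?P y x \<in> JB n) = (kB n y = kB n x)"
    proof (intro ballI)
      fix x y assume x: "x \<in> acarr ?P" and y: "y \<in> acarr ?P"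
      have d: "(\<lambda>p. y p - x p) \<in> acarr ?P" using pa_diff_closed[OF y x] .
      have kd: "kB n (\<lambda>p. y p - x p) = (\<lambda>b. kB n y b - kB n x b)" by (rule kB_diff)
      show "(asub ?P y x \<in> JB n) = (kB n y = kB n x)"
      proof
        assume "asub ?P y x \<in> JB n"
        then have "(\<lambda>p. y p - x p) \<in> WB n" using JB_props(3)[OF n1] by auto
        then have "kB n (\<lambda>p. y p - x p) = (\<lambda>b. 0)" by (simp add: WB_def)
        then show "kB n y = kB n x" unfolding kd by (simp add: fun_eq_iff)
      next
        assume "kB n y = kB n x"
        then have "kB n (\<lambda>p. y p - x p) = (\<lambda>b. 0)" unfolding kd by simp
        then show "asub ?P y x \<in> JB n" using WB_sub_JB[OF n1 d] by simp
      qed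
    qed
  qed
  then show ?thesis unfolding bl .
qed


lemma te_simps:
  "acarr (triv_ext A) = acarr A \<times> kdual A"
  "aadd (triv_ext A) (a, f) (b, g) = (aadd A a b, \<lambda>x. f x + g x)"
  "asmul (triv_ext A) c (a, f) = (asmul A c a, \<lambda>x. c * f x)"
  "amul (triv_ext A) (a, f) (b, g) = (amul A a b, \<lambda>x. if x \<in> acarr A then g (amul A x a) + f (amul A b x) else 0)"
  "aone (triv_ext A) = (aone A, \<lambda>x. 0)"
  by (simp_all add: triv_ext_def)

lemma kdualD:
  assumes "f \<in> kdual A"
  shows "x \<notin> acarr A \<Longrightarrow> f x = 0"
    "x \<in> acarr A \<Longrightarrow> y \<in> acarr A \<Longrightarrow> f (aadd A x y) = f x + f y"
    "x \<in> acarr A \<Longrightarrow> f (asmul A c x) = c * f x"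
  using assms by (auto simp: kdual_def)

lemma triv_ext_transfer:
  assumes iso: "alg_iso A B \<phi>" and cl: "ops_closed A"
  shows "alg_isomorphic (triv_ext A) (triv_ext B)"
proof -
  let ?\<psi> = "inv_into (acarr A) \<phi>"
  have bij: "bij_betw \<phi> (acarr A) (acarr B)" using iso by (simp add: alg_iso_def)
  then have inj: "inj_on \<phi> (acarr A)" and im: "\<phi> ` acarr A = acarr B" by (auto simp: bij_betw_def)
  have \<phi>B: "x \<in> acarr A \<Longrightarrow> \<phi> x \<in> acarr B" for x using im by auto
  have \<psi>A: "x' \<in> acarr B \<Longrightarrow> ?\<psi> x' \<in> acarr A" for x' using im by (metis inv_into_into)
  have \<phi>\<psi>: "x' \<in> acarr B \<Longrightarrow> \<phi> (?\<psi> x') = x'" for x' using im by (simp add: f_inv_into_f)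
  have \<psi>\<phi>: "x \<in> acarr A \<Longrightarrow> ?\<psi> (\<phi> x) = x" for x using inj by simp
  have h: "\<And>x y. x \<in> acarr A \<Longrightarrow> y \<in> acarr A \<Longrightarrow> \<phi> (aadd A x y) = aadd B (\<phi> x) (\<phi> y)"
     "\<And>c x. x \<in> acarr A \<Longrightarrow> \<phi> (asmul A c x) = asmul B c (\<phi> x)"
     "\<And>x y. x \<in> acarr A \<Longrightarrow> y \<in> acarr A \<Longrightarrow> \<phi> (amul A x y) = amul B (\<phi> x) (\<phi> y)"
     "\<phi> (aone A) = aone B" using iso by (auto simp: alg_iso_def)
  have c: "\<And>x y. x \<in> acarr A \<Longrightarrow> y \<in> acarr A \<Longrightarrow> aadd A x y \<in> acarr A"
     "\<And>c x. x \<in> acarr A \<Longrightarrow> asmul A c x \<in> acarr A"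
     "\<And>x y. x \<in> acarr A \<Longrightarrow> y \<in> acarr A \<Longrightarrow> amul A x y \<in> acarr A"
     "aone A \<in> acarr A" using cl by (auto simp: ops_closed_def)
  define tr where "tr f = (\<lambda>x'. if x' \<in> acarr B then f (?\<psi> x') else 0)" for f :: "'b \<Rightarrow> 'a"
  define un where "un g = (\<lambda>x. if x \<in> acarr A then g (\<phi> x) else 0)" for g :: "'c \<Rightarrow> 'a"
  have \<psi>add: "x' \<in> acarr B \<Longrightarrow> y' \<in> acarr B \<Longrightarrow> aadd B x' y' \<in> acarr B \<and> ?\<psi> (aadd B x' y') = aadd A (?\<psi> x') (?\<psi> y')" for x' y'
    using h(1)[OF \<psi>A \<psi>A, of x' y'] \<phi>\<psi> \<psi>\<phi> c(1) \<psi>A \<phi>B by metis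
  have \<psi>smul: "x' \<in> acarr B \<Longrightarrow> asmul B cc x' \<in> acarr B \<and> ?\<psi> (asmul B cc x') = asmul A cc (?\<psi> x')" for cc x'
    using h(2)[OF \<psi>A, of x' cc] \<phi>\<psi> \<psi>\<phi> c(2) \<psi>A \<phi>B by metis
  have \<psi>mul: "x' \<in> acarr B \<Longrightarrow> y' \<in> acarr B \<Longrightarrow> amul B x' y' \<in> acarr B \<and> ?\<psi> (amul B x' y') = amul A (?\<psi> x') (?\<psi> y')" for x' y'
    using h(3)[OF \<psi>A \<psi>A, of x' y'] \<phi>\<psi> \<psi>\<phi> c(3) \<psi>A \<phi>B by metis
  have trD: "f \<in> kdual A \<Longrightarrow> tr f \<in> kdual B" for f
  proof -
    assume f: "f \<in> kdual A"
    show "tr f \<in> kdual B" unfolding kdual_def mem_Collect_eq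
    proof (intro conjI allI ballI impI)
      fix x' assume "x' \<notin> acarr B" then show "tr f x' = 0" by (simp add: tr_def)
    next
      fix x' y' assume a: "x' \<in> acarr B" "y' \<in> acarr B"
      show "tr f (aadd B x' y') = tr f x' + tr f y'"
        using \<psi>add[OF a] a kdualD(2)[OF f \<psi>A \<psi>A] by (simp add: tr_def)
    next
      fix cc x' assume a: "x' \<in> acarr B"
      show "tr f (asmul B cc x') = cc * tr f x'"
        using \<psi>smul[OF a] a kdualD(3)[OF f \<psi>A] by (simp add: tr_def)
    qed
  qed
  have unD: "g \<in> kdual B \<Longrightarrow> un g \<in> kdual A" for g
  proof -
    assume g: "g \<in> kdual B"
    show "un g \<in> kdual A" unfolding kdual_def mem_Collect_eq
    proof (intro conjI allI ballI impI)
      fix x assume "x \<notin> acarr A" then show "un g x = 0" by (simp add: un_def)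
    next
      fix x y assume a: "x \<in> acarr A" "y \<in> acarr A"
      show "un g (aadd A x y) = un g x + un g y"
        using a c(1)[OF a] h(1)[OF a] kdualD(2)[OF g \<phi>B \<phi>B] by (simp add: un_def)
    next
      fix cc x assume a: "x \<in> acarr A"
      show "un g (asmul A cc x) = cc * un g x"
        using a c(2)[OF a] h(2)[OF a] kdualD(3)[OF g \<phi>B] by (simp add: un_def)
    qed
  qed
  have untr: "f \<in> kdual A \<Longrightarrow> un (tr f) = f" for f
    by (auto simp: un_def tr_def fun_eq_iff \<phi>B \<psi>\<phi> kdualD(1))
  have trun: "g \<in> kdual B \<Longrightarrow> tr (un g) = g" for g
    by (auto simp: un_def tr_def fun_eq_iff \<psi>A \<phi>\<psi> kdualD(1))
  define \<Phi> where "\<Phi> = (\<lambda>(a, f). (\<phi> a, tr f))"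
  have "alg_iso (triv_ext A) (triv_ext B) \<Phi>"
    unfolding alg_iso_def
  proof (intro conjI ballI allI)
    show "bij_betw \<Phi> (acarr (triv_ext A)) (acarr (triv_ext B))"
      unfolding te_simps
    proof (rule bij_betw_byWitness[where f'="\<lambda>(a', g). (?\<psi> a', un g)"])
      show "\<Phi> ` (acarr A \<times> kdual A) \<subseteq> acarr B \<times> kdual B" using \<phi>B trD by (auto simp: \<Phi>_def)
      show "(\<lambda>(a', g). (?\<psi> a', un g)) ` (acarr B \<times> kdual B) \<subseteq> acarr A \<times> kdual A" using \<psi>A unD by auto
      show "\<forall>x \<in> acarr A \<times> kdual A. (\<lambda>(a', g). (?\<psi> a', un g)) (\<Phi> x) = x"
        using \<psi>\<phi> untr by (auto simp: \<Phi>_def)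
      show "\<forall>y \<in> acarr B \<times> kdual B. \<Phi> ((\<lambda>(a', g). (?\<psi> a', un g)) y) = y"
        using \<phi>\<psi> trun by (auto simp: \<Phi>_def)
    qed
  next
    fix x y assume "x \<in> acarr (triv_ext A)" "y \<in> acarr (triv_ext A)"
    then obtain a f b g where xy: "x = (a, f)" "y = (b, g)" "a \<in> acarr A" "b \<in> acarr A" "f \<in> kdual A" "g \<in> kdual A"
      by (auto simp: te_simps)
    show "\<Phi> (aadd (triv_ext A) x y) = aadd (triv_ext B) (\<Phi> x) (\<Phi> y)"
      using xy h(1) by (auto simp: te_simps \<Phi>_def tr_def fun_eq_iff)
    show "\<Phi> (amul (triv_ext A) x y) = amul (triv_ext B) (\<Phi> x) (\<Phi> y)"
    proof -
      have "\<Phi> (amul (triv_ext A) x y) = (\<phi> (amul A a b),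
          \<lambda>x'. if x' \<in> acarr B then g (amul A (?\<psi> x') a) + f (amul A b (?\<psi> x')) else 0)"
        using xy \<psi>A by (auto simp: te_simps \<Phi>_def tr_def fun_eq_iff)
      also have "\<dots> = amul (triv_ext B) (\<Phi> x) (\<Phi> y)"
      proof -
        have "\<And>x'. x' \<in> acarr B \<Longrightarrow> tr g (amul B x' (\<phi> a)) + tr f (amul B (\<phi> b) x')
            = g (amul A (?\<psi> x') a) + f (amul A b (?\<psi> x'))"
        proof -
          fix x' assume x': "x' \<in> acarr B"
          have 1: "amul B x' (\<phi> a) \<in> acarr B" "?\<psi> (amul B x' (\<phi> a)) = amul A (?\<psi> x') a"
            using \<psi>mul[OF x' \<phi>B[OF xy(3)]] \<psi>\<phi>[OF xy(3)] by auto
          have 2: "amul B (\<phi> b) x' \<in> acarr B" "?\<psi> (amul B (\<phi> b) x') = amul A b (?\<psi> x')"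
            using \<psi>mul[OF \<phi>B[OF xy(4)] x'] \<psi>\<phi>[OF xy(4)] by auto
          show "tr g (amul B x' (\<phi> a)) + tr f (amul B (\<phi> b) x') = g (amul A (?\<psi> x') a) + f (amul A b (?\<psi> x'))"
            using 1 2 by (simp add: tr_def)
        qed
        then show ?thesis using xy h(3) by (auto simp: te_simps \<Phi>_def fun_eq_iff)
      qed
      finally show ?thesis .
    qed
  next
    fix cc x assume "x \<in> acarr (triv_ext A)"
    then obtain a f where xy: "x = (a, f)" "a \<in> acarr A" "f \<in> kdual A" by (auto simp: te_simps)
    show "\<Phi> (asmul (triv_ext A) cc x) = asmul (triv_ext B) cc (\<Phi> x)"
      using xy h(2) by (auto simp: te_simps \<Phi>_def tr_def fun_eq_iff)
  next
    show "\<Phi> (aone (triv_ext A)) = aone (triv_ext B)"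
      using h(4) by (auto simp: te_simps \<Phi>_def tr_def fun_eq_iff)
  qed
  then show ?thesis unfolding alg_isomorphic_def by blast
qed


definition uA :: "nat \<Rightarrow> aidx \<Rightarrow> aidx \<Rightarrow> 'k::field" where
  "uA n b0 = (\<lambda>b. if b = b0 \<and> b0 \<in> BAs n then 1 else 0)"

definition Theta :: "nat \<Rightarrow> (nat \<Rightarrow> bool) \<Rightarrow> (aidx \<Rightarrow> 'k::field) \<times> ((aidx \<Rightarrow> 'k) \<Rightarrow> 'k) \<Rightarrow> bidx \<Rightarrow> 'k" where
  "Theta n ori = (\<lambda>(c, f) b. if b \<in> BBs n then (case b of E i \<Rightarrow> c (AV i) | S i \<Rightarrow> f (uA n (AV i))
      | Al j \<Rightarrow> if ori j then c (AR j) else f (uA n (AR j))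
      | Be j \<Rightarrow> if ori j then f (uA n (AR j)) else c (AR j)) else 0)"

lemma BAs_mem[simp]: "AV i \<in> BAs n \<longleftrightarrow> i \<in> {1..n}" "AR j \<in> BAs n \<longleftrightarrow> j \<in> {1..<n}"
  by (auto simp: BAs_def)

lemma uA_vcarr: "uA n b0 \<in> vcarr (BAs n)"
  by (simp add: uA_def vcarr_def)

lemma uA_out: "b0 \<notin> BAs n \<Longrightarrow> uA n b0 = (\<lambda>b. 0)"
  by (simp add: uA_def)

context
  fixes n :: nat and ori :: "nat \<Rightarrow> bool" and f :: "(aidx \<Rightarrow> 'k::field) \<Rightarrow> 'k"
  assumes f: "f \<in> kdual (modelA n ori)"
begin

lemma fadd: "x \<in> vcarr (BAs n) \<Longrightarrow> y \<in> vcarr (BAs n) \<Longrightarrow> f (\<lambda>b. x b + y b) = f x + f y"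
  using kdualD(2)[OF f, of x y] by (simp add: modelA_simps)

lemma fsmul: "x \<in> vcarr (BAs n) \<Longrightarrow> f (\<lambda>b. s * x b) = s * f x"
  using kdualD(3)[OF f, of x s] by (simp add: modelA_simps)

lemma fout: "x \<notin> vcarr (BAs n) \<Longrightarrow> f x = 0"
  using kdualD(1)[OF f, of x] by (simp add: modelA_simps)

lemma fzero: "f (\<lambda>b. 0) = 0"
  using fsmul[of "\<lambda>b. 0" 0] by (simp add: vcarr_def)

lemma f_uA_out: "b0 \<notin> BAs n \<Longrightarrow> f (uA n b0) = 0"
proof -
  assume "b0 \<notin> BAs n"
  then have "uA n b0 = (\<lambda>b. 0 :: 'k)" by (rule uA_out)
  then show ?thesis using fzero by simp
qed

lemma vcarr_add: "x \<in> vcarr B \<Longrightarrow> y \<in> vcarr B \<Longrightarrow> (\<lambda>b. x b + y b) \<in> vcarr B"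
  by (simp add: vcarr_def)

lemma vcarr_smul: "x \<in> vcarr B \<Longrightarrow> (\<lambda>b. s * x b) \<in> vcarr B"
  by (simp add: vcarr_def)

lemma f_lin3:
  assumes "x \<in> vcarr (BAs n)" "y \<in> vcarr (BAs n)" "z \<in> vcarr (BAs n)"
  shows "f (\<lambda>b. a * x b + b' * y b + c * z b) = a * f x + b' * f y + c * f z"
proof -
  have "f (\<lambda>b. a * x b + b' * y b + c * z b) = f (\<lambda>b. a * x b + b' * y b) + f (\<lambda>b. c * z b)"
    using fadd[OF vcarr_add[OF vcarr_smul vcarr_smul] vcarr_smul] assms by blast
  also have "f (\<lambda>b. a * x b + b' * y b) = f (\<lambda>b. a * x b) + f (\<lambda>b. b' * y b)"
    using fadd[OF vcarr_smul vcarr_smul] assms by blast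
  finally show ?thesis using fsmul assms by simp
qed

lemma f_expand:
  assumes c: "c \<in> vcarr (BAs n)"
  shows "f c = (\<Sum>b\<in>BAs n. c b * f (uA n b))"
proof -
  have main: "S \<subseteq> BAs n \<Longrightarrow> f (\<lambda>b'. \<Sum>b\<in>S. c b * uA n b b') = (\<Sum>b\<in>S. c b * f (uA n b))" for S
  proof -
    assume "S \<subseteq> BAs n"
    then have "finite S" using BAs_finite finite_subset by blast
    then show ?thesis
    proof (induction S rule: finite_induct)
      case empty then show ?case using fzero by simp
    next
      case (insert b S)
      have v1: "(\<lambda>b'. c b * uA n b b') \<in> vcarr (BAs n)" by (rule vcarr_smul[OF uA_vcarr])
      have v2: "(\<lambda>b'. \<Sum>b\<in>S. c b * uA n b b') \<in> vcarr (BAs n)" by (auto simp: vcarr_def uA_def intro!: sum.neutral)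
      have "f (\<lambda>b'. \<Sum>b\<in>insert b S. c b * uA n b b') = f (\<lambda>b'. c b * uA n b b' + (\<Sum>b\<in>S. c b * uA n b b'))"
        using insert by simp
      also have "\<dots> = f (\<lambda>b'. c b * uA n b b') + f (\<lambda>b'. \<Sum>b\<in>S. c b * uA n b b')"
        using fadd[OF v1 v2] .
      also have "\<dots> = c b * f (uA n b) + (\<Sum>b\<in>S. c b * f (uA n b))"
        using fsmul[OF uA_vcarr] insert by simp
      finally show ?case using insert by simp
    qed
  qed
  have "c = (\<lambda>b'. \<Sum>b\<in>BAs n. c b * uA n b b')"
  proof
    fix b'
    show "c b' = (\<Sum>b\<in>BAs n. c b * uA n b b')"
    proof (cases "b' \<in> BAs n")
      case True
      have "(\<Sum>b\<in>BAs n. c b * uA n b b') = c b' * uA n b' b'"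
        by (rule sum_single_nz) (use True BAs_finite in \<open>auto simp: uA_def\<close>)
      then show ?thesis using True by (simp add: uA_def)
    next
      case False
      then show ?thesis using c by (auto simp: vcarr_def uA_def intro!: sum.neutral)
    qed
  qed
  then show ?thesis using main[of "BAs n"] by simp
qed

end


lemma U1:
  assumes i: "i \<in> {1..n}" and c: "c \<in> vcarr (BAs n)"
  shows "mulA n ori (uA n (AV i)) c = (\<lambda>b. c (AV i) * uA n (AV i) b
     + (if ori i then c (AR i) else 0) * uA n (AR i) b + (if ori (i - 1) then 0 else c (AR (i - 1))) * uA n (AR (i - 1)) b)"
proof
  fix b
  show "mulA n ori (uA n (AV i)) c b = c (AV i) * uA n (AV i) b
     + (if ori i then c (AR i) else 0) * uA n (AR i) b + (if ori (i - 1) then 0 else c (AR (i - 1))) * uA n (AR (i - 1)) b"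
    using i c by (cases b) (auto simp: mulA_def uA_def vcarr_def)
qed

lemma U2:
  assumes i: "i \<in> {1..n}" and d: "d \<in> vcarr (BAs n)"
  shows "mulA n ori d (uA n (AV i)) = (\<lambda>b. d (AV i) * uA n (AV i) b
     + (if ori i then 0 else d (AR i)) * uA n (AR i) b + (if ori (i - 1) then d (AR (i - 1)) else 0) * uA n (AR (i - 1)) b)"
proof
  fix b
  show "mulA n ori d (uA n (AV i)) b = d (AV i) * uA n (AV i) b
     + (if ori i then 0 else d (AR i)) * uA n (AR i) b + (if ori (i - 1) then d (AR (i - 1)) else 0) * uA n (AR (i - 1)) b"
    using i d by (cases b) (auto simp: mulA_def uA_def vcarr_def)
qed

lemma U3:
  assumes j: "j \<in> {1..<n}"
  shows "mulA n ori (uA n (AR j)) c = (\<lambda>b. c (AV (if ori j then Suc j else j)) * uA n (AR j) b)"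
proof
  fix b
  show "mulA n ori (uA n (AR j)) c b = c (AV (if ori j then Suc j else j)) * uA n (AR j) b"
    using j by (cases b) (auto simp: mulA_def uA_def)
qed

lemma U4:
  assumes j: "j \<in> {1..<n}"
  shows "mulA n ori d (uA n (AR j)) = (\<lambda>b. d (AV (if ori j then j else Suc j)) * uA n (AR j) b)"
proof
  fix b
  show "mulA n ori d (uA n (AR j)) b = d (AV (if ori j then j else Suc j)) * uA n (AR j) b"
    using j by (cases b) (auto simp: mulA_def uA_def)
qed

context
  fixes n :: nat and ori :: "nat \<Rightarrow> bool" and c :: "aidx \<Rightarrow> 'k::field" and f :: "(aidx \<Rightarrow> 'k) \<Rightarrow> 'k"
  assumes c: "c \<in> vcarr (BAs n)" and f: "f \<in> kdual (modelA n ori)"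
begin

lemma c_out: "b \<notin> BAs n \<Longrightarrow> c b = 0" using c by (simp add: vcarr_def)

lemma Th_E: "Theta n ori (c, f) (E i) = c (AV i)"
  using c_out[of "AV i"] by (auto simp: Theta_def)

lemma Th_S: "Theta n ori (c, f) (S i) = f (uA n (AV i))"
  using f_uA_out[OF f, of "AV i"] by (auto simp: Theta_def)

lemma Th_Al: "Theta n ori (c, f) (Al j) = (if ori j then c (AR j) else f (uA n (AR j)))"
  using f_uA_out[OF f, of "AR j"] c_out[of "AR j"] by (auto simp: Theta_def)

lemma Th_Be: "Theta n ori (c, f) (Be j) = (if ori j then f (uA n (AR j)) else c (AR j))"
  using f_uA_out[OF f, of "AR j"] c_out[of "AR j"] by (auto simp: Theta_def)

end


definition cA :: "nat \<Rightarrow> (nat \<Rightarrow> bool) \<Rightarrow> (bidx \<Rightarrow> 'k::field) \<Rightarrow> aidx \<Rightarrow> 'k" where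
  "cA n ori v = (\<lambda>b. if b \<in> BAs n then (case b of AV i \<Rightarrow> v (E i) | AR j \<Rightarrow> if ori j then v (Al j) else v (Be j)) else 0)"

definition wA :: "(nat \<Rightarrow> bool) \<Rightarrow> (bidx \<Rightarrow> 'k::field) \<Rightarrow> aidx \<Rightarrow> 'k" where
  "wA ori v = (\<lambda>b. case b of AV i \<Rightarrow> v (S i) | AR j \<Rightarrow> if ori j then v (Be j) else v (Al j))"

definition fA :: "nat \<Rightarrow> (nat \<Rightarrow> bool) \<Rightarrow> (bidx \<Rightarrow> 'k::field) \<Rightarrow> (aidx \<Rightarrow> 'k) \<Rightarrow> 'k" where
  "fA n ori v = (\<lambda>x. if x \<in> vcarr (BAs n) then (\<Sum>b\<in>BAs n. x b * wA ori v b) else 0)"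

lemma fA_kdual: "fA n ori v \<in> kdual (modelA n ori)"
  unfolding kdual_def modelA_simps
proof (intro CollectI conjI allI ballI impI)
  fix x :: "aidx \<Rightarrow> 'a" assume "x \<notin> vcarr (BAs n)" then show "fA n ori v x = 0" by (simp add: fA_def)
next
  fix x y :: "aidx \<Rightarrow> 'a" assume a: "x \<in> vcarr (BAs n)" "y \<in> vcarr (BAs n)"
  then have "(\<lambda>b. x b + y b) \<in> vcarr (BAs n)" by (simp add: vcarr_def)
  then show "fA n ori v (\<lambda>b. x b + y b) = fA n ori v x + fA n ori v y"
    using a by (simp add: fA_def sum.distrib distrib_right)
next
  fix c and x :: "aidx \<Rightarrow> 'a" assume a: "x \<in> vcarr (BAs n)"
  then have "(\<lambda>b. c * x b) \<in> vcarr (BAs n)" by (simp add: vcarr_def)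
  then show "fA n ori v (\<lambda>b. c * x b) = c * fA n ori v x"
    using a by (simp add: fA_def sum_distrib_left mult.assoc)
qed

lemma fA_uA: "b0 \<in> BAs n \<Longrightarrow> fA n ori v (uA n b0) = wA ori v b0"
proof -
  assume b0: "b0 \<in> BAs n"
  have "(\<Sum>b\<in>BAs n. uA n b0 b * wA ori v b) = uA n b0 b0 * wA ori v b0"
    by (rule sum_single_nz) (use b0 BAs_finite in \<open>auto simp: uA_def\<close>)
  moreover have "fA n ori v (uA n b0) = (\<Sum>b\<in>BAs n. uA n b0 b * wA ori v b)"
    unfolding fA_def by (simp add: uA_vcarr)
  ultimately show ?thesis using b0 by (simp add: uA_def)
qed

lemma theta_iso:
  assumes n1: "1 \<le> n"
  shows "alg_iso (triv_ext (modelA n ori)) (modelB n) (Theta n ori :: (aidx \<Rightarrow> 'k::field) \<times> ((aidx \<Rightarrow> 'k) \<Rightarrow> 'k) \<Rightarrow> bidx \<Rightarrow> 'k)"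
  unfolding alg_iso_def
proof (intro conjI ballI allI)
  let ?Inv = "\<lambda>v :: bidx \<Rightarrow> 'k. (cA n ori v, fA n ori v)"
  show "bij_betw (Theta n ori :: (aidx \<Rightarrow> 'k::field) \<times> ((aidx \<Rightarrow> 'k) \<Rightarrow> 'k) \<Rightarrow> bidx \<Rightarrow> 'k) (acarr (triv_ext (modelA n ori))) (acarr (modelB n))"
    unfolding te_simps modelA_simps modelB_simps
  proof (rule bij_betw_byWitness[where f'="?Inv"])
    show "\<forall>a\<in>vcarr (BAs n) \<times> kdual (modelA n ori). ?Inv (Theta n ori a) = a"
    proof
      fix a :: "(aidx \<Rightarrow> 'k) \<times> ((aidx \<Rightarrow> 'k) \<Rightarrow> 'k)" assume a0: "a \<in> vcarr (BAs n) \<times> kdual (modelA n ori)"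
      obtain c f where a1: "a = (c, f)" by (cases a)
      have a: "a = (c, f)" "c \<in> vcarr (BAs n)" "f \<in> kdual (modelA n ori)" using a0 a1 by auto
      have 1: "cA n ori (Theta n ori (c, f)) = c"
      proof
        fix b show "cA n ori (Theta n ori (c, f)) b = c b"
          using a(2) by (cases b) (auto simp: cA_def Th_E[OF a(2,3)] Th_Al[OF a(2,3)] Th_Be[OF a(2,3)] vcarr_def)
      qed
      have 2: "fA n ori (Theta n ori (c, f)) = f"
      proof
        fix x
        show "fA n ori (Theta n ori (c, f)) x = f x"
        proof (cases "x \<in> vcarr (BAs n)")
          case True
          have "\<forall>b\<in>BAs n. wA ori (Theta n ori (c, f)) b = f (uA n b)"
          proof
            fix b assume "b \<in> BAs n"
            show "wA ori (Theta n ori (c, f)) b = f (uA n b)"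
              by (cases b) (auto simp: wA_def Th_S[OF a(2,3)] Th_Al[OF a(2,3)] Th_Be[OF a(2,3)])
          qed
          then show ?thesis using True f_expand[OF a(3) True] by (simp add: fA_def)
        next
          case False then show ?thesis using fout[OF a(3) False] by (simp add: fA_def)
        qed
      qed
      show "?Inv (Theta n ori a) = a" using 1 2 a by simp
    qed
    show "\<forall>v\<in>vcarr (BBs n). Theta n ori (?Inv v) = v"
    proof
      fix v :: "bidx \<Rightarrow> 'k" assume v: "v \<in> vcarr (BBs n)"
      show "Theta n ori (?Inv v) = v"
      proof
        fix b show "Theta n ori (?Inv v) b = v b"
        proof (cases "b \<in> BBs n")
          case False then show ?thesis using v by (simp add: Theta_def vcarr_def)
        next
          case True
          then show ?thesis
            by (cases b) (auto simp: Theta_def cA_def fA_uA wA_def)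
        qed
      qed
    qed
    show "Theta n ori ` (vcarr (BAs n) \<times> kdual (modelA n ori)) \<subseteq> vcarr (BBs n)"
      by (auto simp: Theta_def vcarr_def)
    show "?Inv ` vcarr (BBs n) \<subseteq> vcarr (BAs n) \<times> kdual (modelA n ori)"
      using fA_kdual by (auto simp: cA_def vcarr_def)
  qed
next
  fix x y :: "(aidx \<Rightarrow> 'k) \<times> ((aidx \<Rightarrow> 'k) \<Rightarrow> 'k)" assume x0: "x \<in> acarr (triv_ext (modelA n ori))" and y0: "y \<in> acarr (triv_ext (modelA n ori))"
  obtain c f where x1: "x = (c, f)" by (cases x)
  obtain d g where y1: "y = (d, g)" by (cases y)
  have xy: "x = (c, f)" "y = (d, g)" "c \<in> vcarr (BAs n)" "d \<in> vcarr (BAs n)"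
     "f \<in> kdual (modelA n ori)" "g \<in> kdual (modelA n ori)"
    using x0 y0 x1 y1 by (auto simp: te_simps modelA_simps)
  show "Theta n ori (aadd (triv_ext (modelA n ori)) x y) = aadd (modelB n) (Theta n ori x) (Theta n ori y)"
  proof
    fix b show "Theta n ori (aadd (triv_ext (modelA n ori)) x y) b = aadd (modelB n) (Theta n ori x) (Theta n ori y) b"
      unfolding xy(1,2) te_simps modelA_simps modelB_simps by (cases b) (auto simp: Theta_def)
  qed
  show "Theta n ori (amul (triv_ext (modelA n ori)) x y) = amul (modelB n) (Theta n ori x) (Theta n ori y)"
  proof
    fix b
    let ?h = "\<lambda>z. if z \<in> vcarr (BAs n) then g (mulA n ori z c) + f (mulA n ori d z) else 0"
    have mm: "amul (triv_ext (modelA n ori)) x y = (mulA n ori c d, ?h)"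
      unfolding xy(1,2) te_simps modelA_simps ..
    show "Theta n ori (amul (triv_ext (modelA n ori)) x y) b = amul (modelB n) (Theta n ori x) (Theta n ori y) b"
    proof (cases "b \<in> BBs n")
      case False then show ?thesis unfolding mm unfolding modelB_simps by (simp add: Theta_def mulB_def)
    next
      case bin: True
      have uv: "\<And>b0. (uA n b0 :: aidx \<Rightarrow> 'k) \<in> vcarr (BAs n)" by (rule uA_vcarr)
      note E1 = Th_E[OF xy(3,5)] and E2 = Th_E[OF xy(4,6)]
      note S1 = Th_S[OF xy(3,5)] and S2 = Th_S[OF xy(4,6)]
      note A1 = Th_Al[OF xy(3,5)] and A2 = Th_Al[OF xy(4,6)]
      note B1 = Th_Be[OF xy(3,5)] and B2 = Th_Be[OF xy(4,6)]
      show ?thesis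
      proof (cases b)
        case (E i)
        then show ?thesis using bin unfolding mm unfolding modelB_simps xy(1,2)
          by (simp add: Theta_def mulB_def mulA_def E1 E2)
      next
        case (S i)
        then have i: "i \<in> {1..n}" using bin by simp
        have lhs: "Theta n ori (mulA n ori c d, ?h) b = g (mulA n ori (uA n (AV i)) c) + f (mulA n ori d (uA n (AV i)))"
          using bin S uv by (simp add: Theta_def)
        have gg: "g (mulA n ori (uA n (AV i)) c) = c (AV i) * g (uA n (AV i))
           + (if ori i then c (AR i) else 0) * g (uA n (AR i)) + (if ori (i - 1) then 0 else c (AR (i - 1))) * g (uA n (AR (i - 1)))"
          unfolding U1[OF i xy(3)] by (rule f_lin3[OF xy(6) uv uv uv])
        have ff: "f (mulA n ori d (uA n (AV i))) = d (AV i) * f (uA n (AV i))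
           + (if ori i then 0 else d (AR i)) * f (uA n (AR i)) + (if ori (i - 1) then d (AR (i - 1)) else 0) * f (uA n (AR (i - 1)))"
          unfolding U2[OF i xy(4)] by (rule f_lin3[OF xy(5) uv uv uv])
        show ?thesis unfolding mm unfolding modelB_simps xy(1,2) lhs gg ff using bin S
          by (simp add: mulB_def E1 E2 S1 S2 A1 A2 B1 B2 algebra_simps)
      next
        case (Al j)
        then have j: "j \<in> {1..<n}" using bin by simp
        show ?thesis
        proof (cases "ori j")
          case True
          then show ?thesis using bin Al j unfolding mm unfolding modelB_simps xy(1,2)
            by (simp add: Theta_def mulB_def mulA_def E1 E2 A1 A2)
        next
          case False
          have lhs: "Theta n ori (mulA n ori c d, ?h) b = g (mulA n ori (uA n (AR j)) c) + f (mulA n ori d (uA n (AR j)))"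
            using bin Al False uv by (simp add: Theta_def)
          show ?thesis unfolding mm unfolding modelB_simps xy(1,2) lhs U3[OF j] U4[OF j]
            using fsmul[OF xy(5) uv] fsmul[OF xy(6) uv] bin Al False
            by (simp add: mulB_def E1 E2 A1 A2 algebra_simps)
        qed
      next
        case (Be j)
        then have j: "j \<in> {1..<n}" using bin by simp
        show ?thesis
        proof (cases "ori j")
          case False
          then show ?thesis using bin Be j unfolding mm unfolding modelB_simps xy(1,2)
            by (simp add: Theta_def mulB_def mulA_def E1 E2 B1 B2)
        next
          case True
          have lhs: "Theta n ori (mulA n ori c d, ?h) b = g (mulA n ori (uA n (AR j)) c) + f (mulA n ori d (uA n (AR j)))"
            using bin Be True uv by (simp add: Theta_def)
          show ?thesis unfolding mm unfolding modelB_simps xy(1,2) lhs U3[OF j] U4[OF j]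
            using fsmul[OF xy(5) uv] fsmul[OF xy(6) uv] bin Be True
            by (simp add: mulB_def E1 E2 B1 B2 algebra_simps)
        qed
      qed
    qed
  qed
next
  fix cc and x :: "(aidx \<Rightarrow> 'k) \<times> ((aidx \<Rightarrow> 'k) \<Rightarrow> 'k)" assume "x \<in> acarr (triv_ext (modelA n ori))"
  then obtain c f where xy: "x = (c, f)" by (auto simp: te_simps)
  show "Theta n ori (asmul (triv_ext (modelA n ori)) cc x) = asmul (modelB n) cc (Theta n ori x)"
  proof
    fix b show "Theta n ori (asmul (triv_ext (modelA n ori)) cc x) b = asmul (modelB n) cc (Theta n ori x) b"
      unfolding xy(1) te_simps modelA_simps modelB_simps by (cases b) (auto simp: Theta_def)
  qed
next
  show "Theta n ori (aone (triv_ext (modelA n ori))) = aone (modelB n)"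
  proof
    fix b show "Theta n ori (aone (triv_ext (modelA n ori))) b = aone (modelB n) b"
      unfolding te_simps modelA_simps modelB_simps by (cases b) (auto simp: Theta_def)
  qed
qed


theorem lemma3p8:
  fixes n :: nat and orient :: "nat \<Rightarrow> bool"
    and I :: "(nat \<times> nat list \<Rightarrow> 'k::field) set"
  assumes "alg_closed TYPE('k)"
    and "n \<ge> 1"
    and "gentle (lineQ n orient) I"
    and "rad_sq_zero (quot_alg (path_alg (lineQ n orient)) I)"
  shows "alg_isomorphic (triv_ext (quot_alg (path_alg (lineQ n orient)) I))
           (brauer_line n :: ('k, (nat \<times> barr list \<Rightarrow> 'k) set) kalg)"
proof -
  let ?A = "quot_alg (path_alg (lineQ n orient)) I"
  have q: "alg_iso ?A (modelA n orient) (\<lambda>X. kA n orient (qrep X)) \<and> ops_closed ?A"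
    by (rule quotA_iso[OF assms(3) assms(4)])
  then obtain \<Phi> where \<Phi>: "alg_iso (triv_ext ?A) (triv_ext (modelA n orient)) \<Phi>"
    using triv_ext_transfer unfolding alg_isomorphic_def by blast
  have \<Theta>: "alg_iso (triv_ext (modelA n orient)) (modelB n) (Theta n orient :: (aidx \<Rightarrow> 'k) \<times> ((aidx \<Rightarrow> 'k) \<Rightarrow> 'k) \<Rightarrow> bidx \<Rightarrow> 'k)"
    by (rule theta_iso[OF assms(2)])
  have b: "alg_iso (brauer_line n :: ('k, _) kalg) (modelB n) (\<lambda>X. kB n (qrep X)) \<and> ops_closed (brauer_line n :: ('k, _) kalg)"
    by (rule brauer_iso[OF assms(2)])
  have bi: "alg_iso (modelB n) (brauer_line n :: ('k, _) kalg) (inv_into (acarr (brauer_line n :: ('k, _) kalg)) (\<lambda>X. kB n (qrep X)))"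
    using alg_iso_inv b by blast
  have "alg_iso (triv_ext ?A) (brauer_line n :: ('k, _) kalg)
      (inv_into (acarr (brauer_line n :: ('k, _) kalg)) (\<lambda>X. kB n (qrep X)) \<circ> (Theta n orient \<circ> \<Phi>))"
    by (rule alg_iso_comp[OF alg_iso_comp[OF \<Phi> \<Theta>] bi])
  then show ?thesis unfolding alg_isomorphic_def by blast
qed


end
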